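(* The DSRT$_{\mathsf{A}}$-definable transformations are closed under intersection and composition, but not closed under union.
   Context: A linear group is a triple $\mathbf{G}=(D,\leq,+)$ where $D$ is an infinite set, $\leq$ is a total order on $D$, and $(D,+)$ is a group with identity $0$. For finite label sets $\Sigma,\Gamma$, a $(\Sigma,\Gamma,\mathbf{G})$-streaming register transducer (SRT) is a tuple $\mathcal{S}=(Q,q_0,k,R_0,\Delta)$: $Q$ finite set of states, $q_0\in Q$, $k\in\mathbb{N}$ registers, initial values $R_0\in D^k$, and transitions $\Delta\subseteq Q\times\Sigma\times\{>,=,<\}^k\times\{\mathsf{old},\mathsf{new},\mathsf{add}\}^k\times\{1,\dots,k\}\times\Gamma\times Q$. A transition $(q,\sigma,l,m,u,\gamma,q')$ enables the step $(q,R)\xrightarrow[(\gamma,d')]{(\sigma,d)}(q',R')$ iff (1) for every $i$, $d>R[i]$, $d=R[i]$ or $d<R[i]$ according as $l[i]$ is $>$, $=$, $<$; (2) $R'[i]=R[i]$, $d$, or $R[i]+d$ according as $m[i]$ is $\mathsf{old}$, $\mathsf{new}$, $\mathsf{add}$; (3) $d'=R'[u]$. A run over $s\in(\Sigma\times D)^*$ of length $n$ generating $t\in(\Gamma\times D)^*$ is a sequence of $n$ enabled steps from $(q_0,R_0)$ reading $s[i]$ and emitting $t[i]$. $s\otimes t$ is the word with $i$-th letter $(s[i],t[i])$; $[\![\mathcal{S}]\!]=\{s\otimes t:\text{there is a run over }s\text{ generating }t\}$. An SRT is deterministic if any two distinct transitions $(q_1,\sigma_1,l_1,\dots)$, $(q_2,\sigma_2,l_2,\dots)$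 satisfy $q_1\neq q_2$ or $\sigma_1\neq\sigma_2$ or $l_1\neq l_2$; it is add-free if all update vectors lie in $\{\mathsf{old},\mathsf{new}\}^k$. A DSRT$_{\mathsf{A}}$ is a deterministic add-free SRT; a transformation is DSRT$_{\mathsf{A}}$-definable if it equals $[\![\mathcal{S}]\!]$ for some DSRT$_{\mathsf{A}}$ $\mathcal{S}$. Union and intersection are taken for transducers of the same signature $(\Sigma,\Gamma,\mathbf{G})$. Composition: for $\mathcal{T}_1$ over $(\Sigma\times D)\times(\Gamma\times D)$ and $\mathcal{T}_2$ over $(\Gamma\times D)\times(\Theta\times D)$, $\mathcal{T}_1\cdot\mathcal{T}_2$ is the set of $s_1\otimes s_2$ ($s_1\in(\Sigma\times D)^*$, $s_2\in(\Theta\times D)^*$) such that some $s_3\in(\Gamma\times D)^*$ has $s_1\otimes s_3\in\mathcal{T}_1$ and $s_3\otimes s_2\in\mathcal{T}_2$. *)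

theory Defs
  imports Main
begin

text \<open>States are natural numbers (a finite set Q),
registers are numbered 0..k-1 (the paper uses 1..k), register valuations are lists of
length k. The label sets Sigma, Gamma are finite types; the data domain D is a type
'd with a total order (linorder) and a group structure (group_add); the two are not
required to be compatible, exactly as for a linear group.\<close>

datatype cmp = CGt | CEq | CLt
datatype upd = UOld | UNew | UAdd

type_synonym ('a, 'b) srt_trans = "nat \<times> 'a \<times> cmp list \<times> upd list \<times> nat \<times> 'b \<times> nat"

record ('a, 'b, 'd) srt =
  states :: "nat set"
  init_state :: nat
  nregs :: nat
  init_regs :: "'d list"
  transitions :: "('a, 'b) srt_trans set"

definition srt_wf :: "('a, 'b, 'd) srt \<Rightarrow> bool" where
  "srt_wf S \<longleftrightarrow> finite (states S) \<and> init_state S \<in> states S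
     \<and> length (init_regs S) = nregs S
     \<and> (\<forall>(q, \<sigma>, l, m, u, \<gamma>, q') \<in> transitions S.
          q \<in> states S \<and> q' \<in> states S \<and> length l = nregs S \<and> length m = nregs S
          \<and> u < nregs S)"

fun cmp_ok :: "cmp \<Rightarrow> 'd::linorder \<Rightarrow> 'd \<Rightarrow> bool" where
  "cmp_ok CGt d r = (d > r)"
| "cmp_ok CEq d r = (d = r)"
| "cmp_ok CLt d r = (d < r)"

fun upd_val :: "upd \<Rightarrow> 'd::group_add \<Rightarrow> 'd \<Rightarrow> 'd" where
  "upd_val UOld d r = r"
| "upd_val UNew d r = d"
| "upd_val UAdd d r = r + d"

definition srt_step ::
  "('a, 'b, 'd::{linorder, group_add}) srt \<Rightarrow> nat \<times> 'd list \<Rightarrow> 'a \<times> 'd \<Rightarrow> 'b \<times> 'd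
     \<Rightarrow> nat \<times> 'd list \<Rightarrow> bool" where
  "srt_step S c x y c' \<longleftrightarrow>
     (\<exists>l m u. (fst c, fst x, l, m, u, fst y, fst c') \<in> transitions S
        \<and> length (snd c) = nregs S
        \<and> (\<forall>i < nregs S. cmp_ok (l ! i) (snd x) (snd c ! i))
        \<and> snd c' = map (\<lambda>i. upd_val (m ! i) (snd x) (snd c ! i)) [0..<nregs S]
        \<and> snd y = snd c' ! u)"

fun srt_run ::
  "('a, 'b, 'd::{linorder, group_add}) srt \<Rightarrow> nat \<times> 'd list \<Rightarrow> ('a \<times> 'd) list
     \<Rightarrow> ('b \<times> 'd) list \<Rightarrow> bool" where
  "srt_run S c [] [] = True"
| "srt_run S c (x # s) (y # t) = (\<exists>c'. srt_step S c x y c' \<and> srt_run S c' s t)"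
| "srt_run S c _ _ = False"

definition srt_sem ::
  "('a, 'b, 'd::{linorder, group_add}) srt \<Rightarrow> (('a \<times> 'd) \<times> ('b \<times> 'd)) list set" where
  "srt_sem S = {zip s t | s t. length s = length t
                   \<and> srt_run S (init_state S, init_regs S) s t}"

definition srt_deterministic :: "('a, 'b, 'd) srt \<Rightarrow> bool" where
  "srt_deterministic S \<longleftrightarrow>
     (\<forall>tr1 \<in> transitions S. \<forall>tr2 \<in> transitions S. tr1 \<noteq> tr2 \<longrightarrow>
        (case (tr1, tr2) of ((q1, \<sigma>1, l1, _), (q2, \<sigma>2, l2, _)) \<Rightarrow>
           q1 \<noteq> q2 \<or> \<sigma>1 \<noteq> \<sigma>2 \<or> l1 \<noteq> l2))"

definition srt_add_free :: "('a, 'b, 'd) srt \<Rightarrow> bool" where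
  "srt_add_free S \<longleftrightarrow>
     (\<forall>(q, \<sigma>, l, m, u, \<gamma>, q') \<in> transitions S. set m \<subseteq> {UOld, UNew})"

definition DSRTA_definable ::
  "(('a::finite \<times> 'd::{linorder, group_add}) \<times> ('b::finite \<times> 'd)) list set \<Rightarrow> bool" where
  "DSRTA_definable T \<longleftrightarrow>
     (\<exists>S :: ('a, 'b, 'd) srt. srt_wf S \<and> srt_deterministic S \<and> srt_add_free S
        \<and> T = srt_sem S)"

definition transd_compose ::
  "(('a \<times> 'd) \<times> ('b \<times> 'd)) list set \<Rightarrow> (('b \<times> 'd) \<times> ('c \<times> 'd)) list set
     \<Rightarrow> (('a \<times> 'd) \<times> ('c \<times> 'd)) list set" where
  "transd_compose T1 T2 =
     {zip s1 s2 | s1 s2. length s1 = length s2 \<and>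
        (\<exists>s3. length s3 = length s1 \<and> zip s1 s3 \<in> T1 \<and> zip s3 s2 \<in> T2)}"

end

theory Submission
  imports Defs "HOL-Library.Countable"
begin


definition cmpof :: "'d::linorder \<Rightarrow> 'd \<Rightarrow> cmp" where
  "cmpof a b = (if b < a then CGt else if a = b then CEq else CLt)"

lemma cmp_ok_iff: "cmp_ok c d r \<longleftrightarrow> c = cmpof d r"
  by (cases c) (auto simp: cmpof_def)

fun cflip :: "cmp \<Rightarrow> cmp" where
  "cflip CGt = CLt" | "cflip CEq = CEq" | "cflip CLt = CGt"

lemma cmpof_flip: "cmpof b a = cflip (cmpof a b)"
  by (auto simp: cmpof_def)

lemma cmpof_eq: "cmpof a b = CEq \<longleftrightarrow> a = b"
  by (auto simp: cmpof_def)

lemma zip_inj: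
  assumes "length s = length t" "length s' = length t'" "zip s t = zip s' t'"
  shows "s = s' \<and> t = t'"
proof -
  have "map fst (zip s t) = map fst (zip s' t')" "map snd (zip s t) = map snd (zip s' t')"
    using assms(3) by auto
  thus ?thesis using assms(1,2) by simp
qed

lemma srt_step_det:
  assumes wf: "srt_wf S" and det: "srt_deterministic S"
    and s1: "srt_step S c x y1 c1" and s2: "srt_step S c x y2 c2"
  shows "y1 = y2 \<and> c1 = c2"
proof -
  obtain l1 m1 u1 where t1: "(fst c, fst x, l1, m1, u1, fst y1, fst c1) \<in> transitions S"
    and L1: "length (snd c) = nregs S" "\<forall>i < nregs S. cmp_ok (l1 ! i) (snd x) (snd c ! i)"
    and R1: "snd c1 = map (\<lambda>i. upd_val (m1 ! i) (snd x) (snd c ! i)) [0..<nregs S]"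
    and Y1: "snd y1 = snd c1 ! u1"
    using s1 unfolding srt_step_def by blast
  obtain l2 m2 u2 where t2: "(fst c, fst x, l2, m2, u2, fst y2, fst c2) \<in> transitions S"
    and L2: "\<forall>i < nregs S. cmp_ok (l2 ! i) (snd x) (snd c ! i)"
    and R2: "snd c2 = map (\<lambda>i. upd_val (m2 ! i) (snd x) (snd c ! i)) [0..<nregs S]"
    and Y2: "snd y2 = snd c2 ! u2"
    using s2 unfolding srt_step_def by blast
  have len: "length l1 = nregs S" "length l2 = nregs S"
    using wf t1 t2 unfolding srt_wf_def by fastforce+
  have "l1 = l2"
    by (rule nth_equalityI) (use len L1 L2 in \<open>auto simp: cmp_ok_iff\<close>)
  hence "(fst c, fst x, l1, m1, u1, fst y1, fst c1) = (fst c, fst x, l2, m2, u2, fst y2, fst c2)"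
    using det t1 t2 unfolding srt_deterministic_def by fastforce
  hence "m1 = m2" "u1 = u2" "fst y1 = fst y2" "fst c1 = fst c2" by auto
  thus ?thesis using R1 R2 Y1 Y2 by (metis prod.expand)
qed

lemma srt_run_det:
  assumes wf: "srt_wf S" and det: "srt_deterministic S"
  shows "srt_run S c s t1 \<Longrightarrow> srt_run S c s t2 \<Longrightarrow> t1 = t2"
proof (induction s arbitrary: c t1 t2)
  case Nil
  then show ?case by (cases t1; cases t2) auto
next
  case (Cons x s)
  obtain y1 t1' where e1: "t1 = y1 # t1'" using Cons.prems(1) by (cases t1) auto
  obtain y2 t2' where e2: "t2 = y2 # t2'" using Cons.prems(2) by (cases t2) auto
  obtain c1 where a1: "srt_step S c x y1 c1" "srt_run S c1 s t1'" using Cons.prems(1) e1 by auto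
  obtain c2 where a2: "srt_step S c x y2 c2" "srt_run S c2 s t2'" using Cons.prems(2) e2 by auto
  have "y1 = y2 \<and> c1 = c2" using srt_step_det[OF wf det a1(1) a2(1)] .
  then show ?case using Cons.IH a1(2) a2(2) e1 e2 by auto
qed

lemma DSRTA_functional:
  assumes "DSRTA_definable T" "zip s t1 \<in> T" "zip s t2 \<in> T"
    "length s = length t1" "length s = length t2"
  shows "t1 = t2"
proof -
  obtain S where S: "srt_wf S" "srt_deterministic S" "T = srt_sem S"
    using assms(1) unfolding DSRTA_definable_def by blast
  obtain s1 u1 where A: "zip s t1 = zip s1 u1" "length s1 = length u1"
      "srt_run S (init_state S, init_regs S) s1 u1"
    using assms(2) S(3) unfolding srt_sem_def by blast
  obtain s2 u2 where B: "zip s t2 = zip s2 u2" "length s2 = length u2"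
      "srt_run S (init_state S, init_regs S) s2 u2"
    using assms(3) S(3) unfolding srt_sem_def by blast
  have "s = s1 \<and> t1 = u1" using zip_inj[OF assms(4) A(2) A(1)] .
  moreover have "s = s2 \<and> t2 = u2" using zip_inj[OF assms(5) B(2) B(1)] .
  ultimately show ?thesis using srt_run_det[OF S(1,2)] A(3) B(3) by metis
qed

lemma srt_semI: "srt_run S (init_state S, init_regs S) s t \<Longrightarrow> length s = length t \<Longrightarrow> zip s t \<in> srt_sem S"
  unfolding srt_sem_def by blast

definition ex_srt :: "upd \<Rightarrow> 'a \<Rightarrow> 'b \<Rightarrow> ('a, 'b, 'd::{linorder,group_add}) srt" where
  "ex_srt mu a0 b0 = \<lparr>states = {0}, init_state = 0, nregs = 1, init_regs = [0],
     transitions = {(0, a0, [c], [mu], 0, b0, 0) | c. True}\<rparr>"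

lemma ex_srt_ok:
  assumes "mu \<in> {UOld, UNew}"
  shows "DSRTA_definable (srt_sem (ex_srt mu a0 b0 :: ('a::finite, 'b::finite, 'd::{linorder,group_add}) srt))"
  unfolding DSRTA_definable_def
  apply (rule exI[of _ "ex_srt mu a0 b0"])
  using assms
  by (auto simp: ex_srt_def srt_wf_def srt_deterministic_def srt_add_free_def)

lemma ex_srt_run:
  "srt_run (ex_srt mu a0 b0 :: ('a, 'b, 'd::{linorder,group_add}) srt) (0, [0]) [(a0, d)] [(b0, upd_val mu d 0)]"
proof -
  have "srt_step (ex_srt mu a0 b0 :: ('a, 'b, 'd) srt) (0, [0]) (a0, d) (b0, upd_val mu d 0) (0, [upd_val mu d 0])"
    unfolding srt_step_def ex_srt_def
    by (rule exI[of _ "[cmpof d 0]"], rule exI[of _ "[mu]"], rule exI[of _ 0])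
       (auto simp: cmp_ok_iff)
  thus ?thesis by auto
qed

lemma union_part:
  assumes "infinite (UNIV :: 'd::{linorder, group_add} set)"
  shows "\<exists>T1 T2 :: (('a::finite \<times> 'd) \<times> ('b::finite \<times> 'd)) list set.
            DSRTA_definable T1 \<and> DSRTA_definable T2 \<and> \<not> DSRTA_definable (T1 \<union> T2)"
proof -
  obtain d :: 'd where d: "d \<noteq> 0"
    using assms by (metis finite.emptyI finite_insert ex_new_if_finite insertI1)
  fix a0 :: 'a and b0 :: 'b
  let ?T1 = "srt_sem (ex_srt UNew a0 b0 :: ('a, 'b, 'd) srt)"
  let ?T2 = "srt_sem (ex_srt UOld a0 b0 :: ('a, 'b, 'd) srt)"
  have "srt_run (ex_srt UNew a0 b0 :: ('a, 'b, 'd) srt) (init_state (ex_srt UNew a0 b0 :: ('a, 'b, 'd) srt), init_regs (ex_srt UNew a0 b0 :: ('a, 'b, 'd) srt)) [(a0, d)] [(b0, d)]"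
    using ex_srt_run[of UNew a0 b0 d] by (simp add: ex_srt_def)
  hence m1: "zip [(a0, d)] [(b0, d)] \<in> ?T1"
    by (intro srt_semI) auto
  have "srt_run (ex_srt UOld a0 b0 :: ('a, 'b, 'd) srt) (init_state (ex_srt UOld a0 b0 :: ('a, 'b, 'd) srt), init_regs (ex_srt UOld a0 b0 :: ('a, 'b, 'd) srt)) [(a0, d)] [(b0, 0)]"
    using ex_srt_run[of UOld a0 b0 d] by (simp add: ex_srt_def)
  hence m2: "zip [(a0, d)] [(b0, 0)] \<in> ?T2"
    by (intro srt_semI) auto
  have "\<not> DSRTA_definable (?T1 \<union> ?T2)"
  proof
    assume "DSRTA_definable (?T1 \<union> ?T2)"
    from DSRTA_functional[OF this, of "[(a0, d)]" "[(b0, d)]" "[(b0, 0)]"] m1 m2 d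
    show False by auto
  qed
  thus ?thesis using ex_srt_ok[of UNew a0 b0] ex_srt_ok[of UOld a0 b0] by blast
qed



instance cmp :: countable by countable_datatype

record ('q, 'a, 'b, 'd) adrm =
  aQ :: "'q set"
  aq0 :: 'q
  an :: nat
  aV0 :: "'d list"
  adelta :: "'q \<Rightarrow> 'a \<Rightarrow> (nat \<Rightarrow> nat \<Rightarrow> cmp) \<Rightarrow> (nat \<Rightarrow> cmp)
               \<Rightarrow> ('q \<times> 'b \<times> (nat \<Rightarrow> nat option) \<times> nat option) option"

definition acL :: "nat \<Rightarrow> 'd::linorder list \<Rightarrow> nat \<Rightarrow> nat \<Rightarrow> cmp" where
  "acL n R = (\<lambda>i j. if i < n \<and> j < n then cmpof (R ! i) (R ! j) else CEq)"

definition agL :: "nat \<Rightarrow> 'd::linorder list \<Rightarrow> 'd \<Rightarrow> nat \<Rightarrow> cmp" where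
  "agL n R d = (\<lambda>i. if i < n then cmpof d (R ! i) else CEq)"

definition selv :: "'d \<Rightarrow> 'd list \<Rightarrow> nat option \<Rightarrow> 'd" where
  "selv d R o' = (case o' of None \<Rightarrow> d | Some j \<Rightarrow> R ! j)"

definition adrm_step ::
  "('q, 'a, 'b, 'd::linorder) adrm \<Rightarrow> 'q \<times> 'd list \<Rightarrow> 'a \<times> 'd \<Rightarrow> 'b \<times> 'd \<Rightarrow> 'q \<times> 'd list \<Rightarrow> bool" where
  "adrm_step M c x y c' \<longleftrightarrow> length (snd c) = an M \<and>
     (\<exists>f out. adelta M (fst c) (fst x) (acL (an M) (snd c)) (agL (an M) (snd c) (snd x))
          = Some (fst c', fst y, f, out)
       \<and> snd c' = map (\<lambda>i. selv (snd x) (snd c) (f i)) [0..<an M]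
       \<and> snd y = selv (snd x) (snd c) out)"

fun adrm_run ::
  "('q, 'a, 'b, 'd::linorder) adrm \<Rightarrow> 'q \<times> 'd list \<Rightarrow> ('a \<times> 'd) list \<Rightarrow> ('b \<times> 'd) list \<Rightarrow> bool" where
  "adrm_run M c [] [] = True"
| "adrm_run M c (x # s) (y # t) = (\<exists>c'. adrm_step M c x y c' \<and> adrm_run M c' s t)"
| "adrm_run M c _ _ = False"

definition adrm_sem :: "('q, 'a, 'b, 'd::linorder) adrm \<Rightarrow> (('a \<times> 'd) \<times> ('b \<times> 'd)) list set" where
  "adrm_sem M = {zip s t | s t. length s = length t \<and> adrm_run M (aq0 M, aV0 M) s t}"

definition adrm_wf :: "('q, 'a, 'b, 'd) adrm \<Rightarrow> bool" where
  "adrm_wf M \<longleftrightarrow> finite (aQ M) \<and> aq0 M \<in> aQ M \<and> length (aV0 M) = an M \<and>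
     (\<forall>q \<in> aQ M. \<forall>\<sigma> cL gL q' \<gamma> f out. adelta M q \<sigma> cL gL = Some (q', \<gamma>, f, out) \<longrightarrow>
        q' \<in> aQ M \<and> (\<forall>i < an M. \<forall>j. f i = Some j \<longrightarrow> j < an M) \<and> (\<forall>j. out = Some j \<longrightarrow> j < an M))"

type_synonym 'q cvst = "'q \<times> nat list \<times> cmp list list"

definition cv_states :: "('q, 'a, 'b, 'd) adrm \<Rightarrow> 'q cvst set" where
  "cv_states M = {(q, \<pi>, ord). q \<in> aQ M \<and> length \<pi> = an M \<and> set \<pi> \<subseteq> {..<Suc (an M)}
       \<and> length ord = Suc (an M) \<and> (\<forall>r \<in> set ord. length r = Suc (an M))}"

definition freereg :: "nat list \<Rightarrow> nat" where
  "freereg \<pi> = (LEAST p. p \<notin> set \<pi>)"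

definition neword :: "nat \<Rightarrow> nat \<Rightarrow> cmp list \<Rightarrow> cmp list list \<Rightarrow> cmp list list" where
  "neword P p l ord = map (\<lambda>a. map (\<lambda>b. if a = p then (if b = p then CEq else l ! b)
        else if b = p then cflip (l ! a) else ord ! a ! b) [0..<P]) [0..<P]"

definition cv_fun :: "('q, 'a, 'b, 'd) adrm \<Rightarrow> 'q cvst \<Rightarrow> 'a \<Rightarrow> cmp list
     \<Rightarrow> (upd list \<times> nat \<times> 'b \<times> 'q cvst) option" where
  "cv_fun M st \<sigma> l = (case st of (q, \<pi>, ord) \<Rightarrow>
     (case adelta M q \<sigma> (\<lambda>i j. if i < an M \<and> j < an M then ord ! (\<pi> ! i) ! (\<pi> ! j) else CEq)
                       (\<lambda>i. if i < an M then l ! (\<pi> ! i) else CEq) of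
        None \<Rightarrow> None
      | Some (q', \<gamma>, f, out) \<Rightarrow>
          Some (map (\<lambda>a. if a = freereg \<pi> then UNew else UOld) [0..<Suc (an M)],
                (case out of None \<Rightarrow> freereg \<pi> | Some j \<Rightarrow> \<pi> ! j),
                \<gamma>,
                (q', map (\<lambda>i. case f i of None \<Rightarrow> freereg \<pi> | Some j \<Rightarrow> \<pi> ! j) [0..<an M],
                 neword (Suc (an M)) (freereg \<pi>) l ord))))"

definition ordOf :: "'d::linorder list \<Rightarrow> cmp list list" where
  "ordOf R = map (\<lambda>a. map (\<lambda>b. cmpof (R ! a) (R ! b)) [0..<length R]) [0..<length R]"

definition cv_init :: "('q, 'a, 'b, 'd::{linorder,zero}) adrm \<Rightarrow> 'q cvst" where
  "cv_init M = (aq0 M, [0..<an M], ordOf (aV0 M @ [0]))"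

definition cv :: "('q::countable, 'a, 'b, 'd::{linorder,group_add}) adrm \<Rightarrow> ('a, 'b, 'd) srt" where
  "cv M = \<lparr>states = to_nat ` cv_states M, init_state = to_nat (cv_init M),
      nregs = Suc (an M), init_regs = aV0 M @ [0],
      transitions = {(to_nat st, \<sigma>, l, m, u, \<gamma>, to_nat st') | st \<sigma> l m u \<gamma> st'.
         st \<in> cv_states M \<and> length l = Suc (an M) \<and> cv_fun M st \<sigma> l = Some (m, u, \<gamma>, st')}\<rparr>"

lemma freereg: "freereg \<pi> \<notin> set \<pi>" "freereg \<pi> \<le> length \<pi>"
proof -
  have "\<exists>p \<le> length \<pi>. p \<notin> set \<pi>"
  proof (rule ccontr)
    assume "\<not> ?thesis"
    hence "{0..length \<pi>} \<subseteq> set \<pi>" by auto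
    hence "card {0..length \<pi>} \<le> card (set \<pi>)" by (intro card_mono) auto
    moreover have "card (set \<pi>) \<le> length \<pi>" by (rule card_length)
    ultimately show False by simp
  qed
  then obtain p where p: "p \<le> length \<pi>" "p \<notin> set \<pi>" by blast
  show "freereg \<pi> \<notin> set \<pi>" unfolding freereg_def using p(2) by (rule LeastI)
  show "freereg \<pi> \<le> length \<pi>" unfolding freereg_def using p by (meson Least_le le_trans)
qed

lemma finite_cmp: "finite (UNIV :: cmp set)"
proof -
  have "UNIV = {CGt, CEq, CLt}" by (auto intro: cmp.exhaust)
  thus ?thesis by (metis finite.emptyI finite.insertI)
qed

lemma finite_cv_states: "finite (aQ M) \<Longrightarrow> finite (cv_states M)"
proof -
  assume fQ: "finite (aQ M)"
  let ?P = "Suc (an M)"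
  have f1: "finite {\<pi> :: nat list. set \<pi> \<subseteq> {..<?P} \<and> length \<pi> = an M}"
    by (rule finite_lists_length_eq) simp
  have f2: "finite {r :: cmp list. set r \<subseteq> UNIV \<and> length r = ?P}"
    by (rule finite_lists_length_eq) (rule finite_cmp)
  have f3: "finite {ord. set ord \<subseteq> {r :: cmp list. set r \<subseteq> UNIV \<and> length r = ?P} \<and> length ord = ?P}"
    by (rule finite_lists_length_eq) (rule f2)
  have "cv_states M \<subseteq> aQ M \<times> {\<pi> :: nat list. set \<pi> \<subseteq> {..<?P} \<and> length \<pi> = an M}
       \<times> {ord. set ord \<subseteq> {r :: cmp list. set r \<subseteq> UNIV \<and> length r = ?P} \<and> length ord = ?P}"
    unfolding cv_states_def by auto
  thus ?thesis using fQ f1 f3 by (meson finite_SigmaI finite_subset)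
qed



definition cv_sim :: "('q, 'a, 'b, 'd::linorder) adrm \<Rightarrow> 'q cvst \<Rightarrow> 'd list \<Rightarrow> 'q \<times> 'd list \<Rightarrow> bool" where
  "cv_sim M st Rp c \<longleftrightarrow> st \<in> cv_states M \<and> fst st = fst c \<and> length Rp = Suc (an M)
     \<and> length (snd c) = an M \<and> (\<forall>i < an M. snd c ! i = Rp ! (fst (snd st) ! i))
     \<and> (\<forall>a < Suc (an M). \<forall>b < Suc (an M). snd (snd st) ! a ! b = cmpof (Rp ! a) (Rp ! b))"

lemma cv_args:
  assumes sim: "cv_sim M (q, \<pi>, ord) Rp (q, R)"
    and l: "l = map (\<lambda>a. cmpof d (Rp ! a)) [0..<Suc (an M)]"
  shows "(\<lambda>i j. if i < an M \<and> j < an M then ord ! (\<pi> ! i) ! (\<pi> ! j) else CEq) = acL (an M) R"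
    and "(\<lambda>i. if i < an M then l ! (\<pi> ! i) else CEq) = agL (an M) R d"
proof -
  have pi: "\<And>i. i < an M \<Longrightarrow> \<pi> ! i < Suc (an M)"
  proof -
    fix i assume "i < an M"
    moreover have "length \<pi> = an M" "set \<pi> \<subseteq> {..<Suc (an M)}"
      using sim unfolding cv_sim_def cv_states_def by auto
    ultimately show "\<pi> ! i < Suc (an M)" by (metis lessThan_iff nth_mem subsetD)
  qed
  show "(\<lambda>i j. if i < an M \<and> j < an M then ord ! (\<pi> ! i) ! (\<pi> ! j) else CEq) = acL (an M) R"
    using sim pi unfolding cv_sim_def acL_def by (auto intro!: ext)
  show "(\<lambda>i. if i < an M then l ! (\<pi> ! i) else CEq) = agL (an M) R d"
    using sim pi unfolding cv_sim_def agL_def l by (auto simp del: upt_Suc intro!: ext)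
qed

lemma cv_fun_eq:
  assumes sim: "cv_sim M (q, \<pi>, ord) Rp (q, R)"
    and l: "l = map (\<lambda>a. cmpof d (Rp ! a)) [0..<Suc (an M)]"
  shows "cv_fun M (q, \<pi>, ord) \<sigma> l = (case adelta M q \<sigma> (acL (an M) R) (agL (an M) R d) of
        None \<Rightarrow> None
      | Some (q', \<gamma>, f, out) \<Rightarrow>
          Some (map (\<lambda>a. if a = freereg \<pi> then UNew else UOld) [0..<Suc (an M)],
                (case out of None \<Rightarrow> freereg \<pi> | Some j \<Rightarrow> \<pi> ! j),
                \<gamma>,
                (q', map (\<lambda>i. case f i of None \<Rightarrow> freereg \<pi> | Some j \<Rightarrow> \<pi> ! j) [0..<an M],
                 neword (Suc (an M)) (freereg \<pi>) l ord)))"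
  unfolding cv_fun_def using cv_args[OF sim l] by simp

lemma cv_core:
  assumes wf: "adrm_wf M" and sim: "cv_sim M (q, \<pi>, ord) Rp (q, R)"
    and l: "l = map (\<lambda>a. cmpof d (Rp ! a)) [0..<Suc (an M)]"
    and dl: "adelta M q \<sigma> (acL (an M) R) (agL (an M) R d) = Some (q', \<gamma>, f, out)"
  defines "p \<equiv> freereg \<pi>"
  defines "m \<equiv> map (\<lambda>a. if a = p then UNew else UOld) [0..<Suc (an M)]"
  defines "Rp' \<equiv> map (\<lambda>a. upd_val (m ! a) d (Rp ! a)) [0..<Suc (an M)]"
  shows "cv_sim M (q', map (\<lambda>i. case f i of None \<Rightarrow> p | Some j \<Rightarrow> \<pi> ! j) [0..<an M],
                 neword (Suc (an M)) p l ord) Rp'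
            (q', map (\<lambda>i. selv d R (f i)) [0..<an M])"
    and "Rp' ! (case out of None \<Rightarrow> p | Some j \<Rightarrow> \<pi> ! j) = selv d R out"
proof -
  let ?n = "an M"
  have st: "(q, \<pi>, ord) \<in> cv_states M" and lenRp: "length Rp = Suc ?n"
    and lenR: "length R = ?n" and RR: "\<forall>i < ?n. R ! i = Rp ! (\<pi> ! i)"
    and oo: "\<forall>a < Suc ?n. \<forall>b < Suc ?n. ord ! a ! b = cmpof (Rp ! a) (Rp ! b)"
    using sim unfolding cv_sim_def by auto
  have qQ: "q \<in> aQ M" and lpi: "length \<pi> = ?n" and spi: "set \<pi> \<subseteq> {..<Suc ?n}"
    using st unfolding cv_states_def by auto
  have wfd: "q' \<in> aQ M" "\<And>i j. i < ?n \<Longrightarrow> f i = Some j \<Longrightarrow> j < ?n" "\<And>j. out = Some j \<Longrightarrow> j < ?n"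
    using wf qQ dl unfolding adrm_wf_def by blast+
  have pfree: "p \<notin> set \<pi>" and ple: "p < Suc ?n"
    using freereg[of \<pi>] lpi unfolding p_def by auto
  have pij: "\<And>j. j < ?n \<Longrightarrow> \<pi> ! j \<noteq> p \<and> \<pi> ! j < Suc ?n"
    using pfree spi lpi by (metis lessThan_iff nth_mem subsetD)
  have Rp'n: "\<And>a. a < Suc ?n \<Longrightarrow> Rp' ! a = (if a = p then d else Rp ! a)"
    unfolding Rp'_def m_def by (simp del: upt_Suc)
  have lenRp': "length Rp' = Suc ?n" unfolding Rp'_def by simp
  have ln: "\<And>a. a < Suc ?n \<Longrightarrow> l ! a = cmpof d (Rp ! a)"
    unfolding l by (simp del: upt_Suc)
  show "Rp' ! (case out of None \<Rightarrow> p | Some j \<Rightarrow> \<pi> ! j) = selv d R out"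
  proof (cases out)
    case None thus ?thesis using Rp'n ple by (simp add: selv_def)
  next
    case (Some j) thus ?thesis using Rp'n pij[of j] wfd(3)[of j] RR by (simp add: selv_def)
  qed
  let ?pi' = "map (\<lambda>i. case f i of None \<Rightarrow> p | Some j \<Rightarrow> \<pi> ! j) [0..<an M]"
  have pi'n: "\<And>i. i < ?n \<Longrightarrow> ?pi' ! i < Suc ?n \<and> Rp' ! (?pi' ! i) = selv d R (f i)"
  proof -
    fix i assume i: "i < ?n"
    show "?pi' ! i < Suc ?n \<and> Rp' ! (?pi' ! i) = selv d R (f i)"
    proof (cases "f i")
      case None thus ?thesis using i Rp'n ple by (simp add: selv_def)
    next
      case (Some j) thus ?thesis using i Rp'n pij[of j] wfd(2)[of i j] RR by (simp add: selv_def)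
    qed
  qed
  have st': "(q', ?pi', neword (Suc ?n) p l ord) \<in> cv_states M"
    unfolding cv_states_def neword_def using wfd(1) pi'n
    by (auto simp del: upt_Suc simp: in_set_conv_nth)
  have ord': "\<forall>a < Suc ?n. \<forall>b < Suc ?n. neword (Suc ?n) p l ord ! a ! b = cmpof (Rp' ! a) (Rp' ! b)"
  proof (intro allI impI)
    fix a b assume a: "a < Suc ?n" and b: "b < Suc ?n"
    show "neword (Suc ?n) p l ord ! a ! b = cmpof (Rp' ! a) (Rp' ! b)"
      unfolding neword_def using a b Rp'n[OF a] Rp'n[OF b] ln[OF a] ln[OF b] oo
      by (simp del: upt_Suc add: cmpof_flip[of "Rp ! a" d] cmpof_def) (auto dest: less_asym)
  qed
  show "cv_sim M (q', ?pi', neword (Suc (an M)) p l ord) Rp' (q', map (\<lambda>i. selv d R (f i)) [0..<an M])"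
    unfolding cv_sim_def using st' lenRp' ord' pi'n by simp
qed



lemma cv_fun_wf:
  assumes wf: "adrm_wf M" and st: "st \<in> cv_states M" and l: "length l = Suc (an M)"
    and cf: "cv_fun M st \<sigma> l = Some (m, u, \<gamma>, st')"
  shows "st' \<in> cv_states M \<and> length m = Suc (an M) \<and> u < Suc (an M) \<and> set m \<subseteq> {UOld, UNew}"
proof -
  obtain q \<pi> ord where ste: "st = (q, \<pi>, ord)" by (cases st) auto
  let ?n = "an M"
  have qQ: "q \<in> aQ M" and lpi: "length \<pi> = ?n" and spi: "set \<pi> \<subseteq> {..<Suc ?n}"
    using st unfolding cv_states_def ste by auto
  obtain q' f out where dl: "adelta M q \<sigma> (\<lambda>i j. if i < an M \<and> j < an M then ord ! (\<pi> ! i) ! (\<pi> ! j) else CEq)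
                       (\<lambda>i. if i < an M then l ! (\<pi> ! i) else CEq) = Some (q', \<gamma>, f, out)"
    and res: "m = map (\<lambda>a. if a = freereg \<pi> then UNew else UOld) [0..<Suc (an M)]"
      "u = (case out of None \<Rightarrow> freereg \<pi> | Some j \<Rightarrow> \<pi> ! j)"
      "st' = (q', map (\<lambda>i. case f i of None \<Rightarrow> freereg \<pi> | Some j \<Rightarrow> \<pi> ! j) [0..<an M],
                 neword (Suc (an M)) (freereg \<pi>) l ord)"
    using cf unfolding cv_fun_def ste by (auto split: option.splits)
  have wfd: "q' \<in> aQ M" "\<And>i j. i < ?n \<Longrightarrow> f i = Some j \<Longrightarrow> j < ?n" "\<And>j. out = Some j \<Longrightarrow> j < ?n"
    using wf qQ dl unfolding adrm_wf_def by blast+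
  have ple: "freereg \<pi> < Suc ?n" using freereg(2)[of \<pi>] lpi by simp
  have pij: "\<And>j. j < ?n \<Longrightarrow> \<pi> ! j < Suc ?n"
    using spi lpi by (metis lessThan_iff nth_mem subsetD)
  have u: "u < Suc ?n" using res(2) ple pij wfd(3) by (cases out) auto
  have pin: "\<And>i. i < ?n \<Longrightarrow> (case f i of None \<Rightarrow> freereg \<pi> | Some j \<Rightarrow> \<pi> ! j) < Suc ?n"
    using ple pij wfd(2) by (auto split: option.splits)
  have "st' \<in> cv_states M"
    unfolding res(3) cv_states_def neword_def using wfd(1) pin
    by (auto simp del: upt_Suc simp: in_set_conv_nth)
  thus ?thesis using u res(1) by auto
qed

lemma cv_init_sim:
  assumes wf: "adrm_wf M"
  shows "cv_sim M (cv_init M) (aV0 M @ [0]) (aq0 M, aV0 M)"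
proof -
  have len: "length (aV0 M) = an M" "aq0 M \<in> aQ M" using wf unfolding adrm_wf_def by auto
  show ?thesis
    unfolding cv_sim_def cv_init_def cv_states_def ordOf_def using len
    by (auto simp del: upt_Suc simp: in_set_conv_nth nth_append)
qed

lemma cv_props:
  assumes wf: "adrm_wf M"
  shows "srt_wf (cv M) \<and> srt_deterministic (cv M) \<and> srt_add_free (cv M)"
proof -
  have fin: "finite (aQ M)" using wf unfolding adrm_wf_def by auto
  have ini: "cv_init M \<in> cv_states M" using cv_init_sim[OF wf] unfolding cv_sim_def by auto
  have lv: "length (aV0 M) = an M" using wf unfolding adrm_wf_def by auto
  have w: "srt_wf (cv M)"
    unfolding srt_wf_def cv_def using finite_cv_states[OF fin] ini lv cv_fun_wf[OF wf]
    by fastforce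
  have d: "srt_deterministic (cv M)"
    unfolding srt_deterministic_def cv_def by (auto simp: inj_eq)
  have a: "srt_add_free (cv M)"
    unfolding srt_add_free_def cv_def using cv_fun_wf[OF wf] by fastforce
  show ?thesis using w d a by auto
qed

lemma cv_step_fwd:
  assumes wf: "adrm_wf M" and sim: "cv_sim M st Rp c" and stp: "adrm_step M c x y c'"
  shows "\<exists>st' Rp'. srt_step (cv M) (to_nat st, Rp) x y (to_nat st', Rp') \<and> cv_sim M st' Rp' c'"
proof -
  obtain q \<pi> ord where ste: "st = (q, \<pi>, ord)" by (cases st) auto
  obtain R where ce: "c = (q, R)" using sim ste unfolding cv_sim_def by (cases c) auto
  obtain \<sigma> d where xe: "x = (\<sigma>, d)" by (cases x) auto
  obtain \<gamma> e where ye: "y = (\<gamma>, e)" by (cases y) auto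
  obtain q' R' where c'e: "c' = (q', R')" by (cases c') auto
  have sim': "cv_sim M (q, \<pi>, ord) Rp (q, R)" using sim ste ce by simp
  obtain f out where dl: "adelta M q \<sigma> (acL (an M) R) (agL (an M) R d) = Some (q', \<gamma>, f, out)"
    and R': "R' = map (\<lambda>i. selv d R (f i)) [0..<an M]" and e: "e = selv d R out"
    using stp unfolding adrm_step_def ce xe ye c'e by auto
  define l where "l = map (\<lambda>a. cmpof d (Rp ! a)) [0..<Suc (an M)]"
  define p where "p = freereg \<pi>"
  define m where "m = map (\<lambda>a. if a = p then UNew else UOld) [0..<Suc (an M)]"
  define Rp' where "Rp' = map (\<lambda>a. upd_val (m ! a) d (Rp ! a)) [0..<Suc (an M)]"
  define u where "u = (case out of None \<Rightarrow> p | Some j \<Rightarrow> \<pi> ! j)"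
  define st' where "st' = (q', map (\<lambda>i. case f i of None \<Rightarrow> p | Some j \<Rightarrow> \<pi> ! j) [0..<an M],
                 neword (Suc (an M)) p l ord)"
  have cf: "cv_fun M (q, \<pi>, ord) \<sigma> l = Some (m, u, \<gamma>, st')"
    using cv_fun_eq[OF sim' l_def, of \<sigma>] dl unfolding m_def u_def st'_def p_def by simp
  have core: "cv_sim M st' Rp' (q', R')" "Rp' ! u = e"
    using cv_core[OF wf sim' l_def dl] unfolding st'_def Rp'_def m_def u_def p_def R' e by auto
  have stS: "st \<in> cv_states M" and lenRp: "length Rp = Suc (an M)" using sim unfolding cv_sim_def by auto
  have tr: "(to_nat st, \<sigma>, l, m, u, \<gamma>, to_nat st') \<in> transitions (cv M)"
    unfolding cv_def using cf stS ste l_def st'_def by (auto simp del: upt_Suc)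
  have "srt_step (cv M) (to_nat st, Rp) x y (to_nat st', Rp')"
    unfolding srt_step_def xe ye
    apply (rule exI[of _ l], rule exI[of _ m], rule exI[of _ u])
    using tr lenRp core(2) unfolding Rp'_def l_def by (auto simp: cv_def cmp_ok_iff simp del: upt_Suc)
  thus ?thesis using core(1) c'e by blast
qed

lemma cv_step_bwd:
  assumes wf: "adrm_wf M" and sim: "cv_sim M st Rp c" and stp: "srt_step (cv M) (to_nat st, Rp) x y C'"
  shows "\<exists>st' Rp' c'. C' = (to_nat st', Rp') \<and> adrm_step M c x y c' \<and> cv_sim M st' Rp' c'"
proof -
  obtain q \<pi> ord where ste: "st = (q, \<pi>, ord)" by (cases st) auto
  obtain R where ce: "c = (q, R)" using sim ste unfolding cv_sim_def by (cases c) auto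
  obtain \<sigma> d where xe: "x = (\<sigma>, d)" by (cases x) auto
  obtain \<gamma> e where ye: "y = (\<gamma>, e)" by (cases y) auto
  have sim': "cv_sim M (q, \<pi>, ord) Rp (q, R)" using sim ste ce by simp
  have lenRp: "length Rp = Suc (an M)" and lenR: "length R = an M" using sim' unfolding cv_sim_def by auto
  obtain l m u where tr: "(to_nat st, \<sigma>, l, m, u, \<gamma>, fst C') \<in> transitions (cv M)"
    and L: "\<forall>i < Suc (an M). cmp_ok (l ! i) d (Rp ! i)"
    and RC: "snd C' = map (\<lambda>i. upd_val (m ! i) d (Rp ! i)) [0..<Suc (an M)]"
    and Y: "e = snd C' ! u"
    using stp unfolding srt_step_def xe ye by (auto simp: cv_def simp del: upt_Suc)
  obtain st0 st' where st0: "to_nat st0 = to_nat st" "st0 \<in> cv_states M" "length l = Suc (an M)"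
      "cv_fun M st0 \<sigma> l = Some (m, u, \<gamma>, st')" "fst C' = to_nat st'"
    using tr unfolding cv_def by auto
  have "st0 = st" using st0(1) by simp
  have l: "l = map (\<lambda>a. cmpof d (Rp ! a)) [0..<Suc (an M)]"
    by (rule nth_equalityI) (use st0(3) L in \<open>auto simp: cmp_ok_iff simp del: upt_Suc\<close>)
  have cf: "cv_fun M (q, \<pi>, ord) \<sigma> l = Some (m, u, \<gamma>, st')" using st0 \<open>st0 = st\<close> ste by simp
  obtain q' f out where dl: "adelta M q \<sigma> (acL (an M) R) (agL (an M) R d) = Some (q', \<gamma>, f, out)"
    and res: "m = map (\<lambda>a. if a = freereg \<pi> then UNew else UOld) [0..<Suc (an M)]"
      "u = (case out of None \<Rightarrow> freereg \<pi> | Some j \<Rightarrow> \<pi> ! j)"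
      "st' = (q', map (\<lambda>i. case f i of None \<Rightarrow> freereg \<pi> | Some j \<Rightarrow> \<pi> ! j) [0..<an M],
                 neword (Suc (an M)) (freereg \<pi>) l ord)"
    using cf unfolding cv_fun_eq[OF sim' l] by (auto split: option.splits)
  have core: "cv_sim M st' (snd C') (q', map (\<lambda>i. selv d R (f i)) [0..<an M])" "snd C' ! u = selv d R out"
    using cv_core[OF wf sim' l dl] unfolding res RC by auto
  have "adrm_step M c x y (q', map (\<lambda>i. selv d R (f i)) [0..<an M])"
    unfolding adrm_step_def ce xe ye using lenR dl Y core(2) by auto
  moreover have "C' = (to_nat st', snd C')" using st0(5) by (metis prod.collapse)
  ultimately show ?thesis using core(1) by blast
qed

lemma cv_run:
  assumes wf: "adrm_wf M"
  shows "cv_sim M st Rp c \<Longrightarrow> srt_run (cv M) (to_nat st, Rp) s t \<longleftrightarrow> adrm_run M c s t"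
proof (induction s arbitrary: st Rp c t)
  case Nil
  then show ?case by (cases t) auto
next
  case (Cons x s)
  show ?case
  proof (cases t)
    case Nil
    then show ?thesis by simp
  next
    case (Cons y t')
    show ?thesis
    proof
      assume "srt_run (cv M) (to_nat st, Rp) (x # s) t"
      then obtain C' where a: "srt_step (cv M) (to_nat st, Rp) x y C'" "srt_run (cv M) C' s t'"
        using Cons by auto
      obtain st' Rp' c' where b: "C' = (to_nat st', Rp')" "adrm_step M c x y c'" "cv_sim M st' Rp' c'"
        using cv_step_bwd[OF wf Cons.prems a(1)] by blast
      have "adrm_run M c' s t'" using Cons.IH[OF b(3)] a(2) b(1) by simp
      thus "adrm_run M c (x # s) t" using b(2) Cons by (cases c') auto
    next
      assume "adrm_run M c (x # s) t"
      then obtain c' where a: "adrm_step M c x y c'" "adrm_run M c' s t'" using Cons by auto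
      obtain st' Rp' where b: "srt_step (cv M) (to_nat st, Rp) x y (to_nat st', Rp')" "cv_sim M st' Rp' c'"
        using cv_step_fwd[OF wf Cons.prems a(1)] by blast
      have "srt_run (cv M) (to_nat st', Rp') s t'" using Cons.IH[OF b(2)] a(2) by simp
      thus "srt_run (cv M) (to_nat st, Rp) (x # s) t" using b(1) Cons by auto
    qed
  qed
qed

lemma adrm_definable:
  fixes M :: "('q::countable, 'a::finite, 'b::finite, 'd::{linorder,group_add}) adrm"
  assumes wf: "adrm_wf M"
  shows "DSRTA_definable (adrm_sem M)"
proof -
  have "srt_sem (cv M) = adrm_sem M"
    unfolding srt_sem_def adrm_sem_def
    using cv_run[OF wf cv_init_sim[OF wf]] by (simp add: cv_def)
  thus ?thesis unfolding DSRTA_definable_def using cv_props[OF wf] by metis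
qed



definition tlook :: "('a, 'b) srt_trans set \<Rightarrow> nat \<Rightarrow> 'a \<Rightarrow> cmp list \<Rightarrow> (upd list \<times> nat \<times> 'b \<times> nat) option" where
  "tlook T q \<sigma> l = (if \<exists>r. (q, \<sigma>, l, r) \<in> T then Some (SOME r. (q, \<sigma>, l, r) \<in> T) else None)"

lemma tlook_some: "tlook T q \<sigma> l = Some r \<Longrightarrow> (q, \<sigma>, l, r) \<in> T"
proof -
  assume a: "tlook T q \<sigma> l = Some r"
  then obtain r0 where "(q, \<sigma>, l, r0) \<in> T" unfolding tlook_def by (auto split: if_splits)
  hence "(q, \<sigma>, l, SOME r. (q, \<sigma>, l, r) \<in> T) \<in> T" by (rule someI)
  thus ?thesis using a unfolding tlook_def by (auto split: if_splits)
qed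

lemma tlook_det:
  assumes det: "srt_deterministic S" and tr: "(q, \<sigma>, l, r) \<in> transitions S"
  shows "tlook (transitions S) q \<sigma> l = Some r"
proof -
  have uniq: "\<And>r'. (q, \<sigma>, l, r') \<in> transitions S \<Longrightarrow> r' = r"
  proof (rule ccontr)
    fix r' assume r': "(q, \<sigma>, l, r') \<in> transitions S" and ne: "r' \<noteq> r"
    have "\<forall>tr1 \<in> transitions S. \<forall>tr2 \<in> transitions S. tr1 \<noteq> tr2 \<longrightarrow>
        (case (tr1, tr2) of ((q1, \<sigma>1, l1, _), (q2, \<sigma>2, l2, _)) \<Rightarrow> q1 \<noteq> q2 \<or> \<sigma>1 \<noteq> \<sigma>2 \<or> l1 \<noteq> l2)"
      using det unfolding srt_deterministic_def by assumption
    hence "(q, \<sigma>, l, r') \<noteq> (q, \<sigma>, l, r) \<longrightarrow>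
        (case ((q, \<sigma>, l, r'), (q, \<sigma>, l, r)) of ((q1, \<sigma>1, l1, _), (q2, \<sigma>2, l2, _)) \<Rightarrow> q1 \<noteq> q2 \<or> \<sigma>1 \<noteq> \<sigma>2 \<or> l1 \<noteq> l2)"
      using r' tr by (rule bspec[OF bspec[of _ _ "(q, \<sigma>, l, r')"]])
    moreover have "(q, \<sigma>, l, r') \<noteq> (q, \<sigma>, l, r)" using ne by simp
    ultimately show False by simp
  qed
  have ex: "\<exists>r. (q, \<sigma>, l, r) \<in> transitions S" using tr by blast
  have "(SOME r. (q, \<sigma>, l, r) \<in> transitions S) = r"
    by (rule some_equality[where P = "\<lambda>r. (q, \<sigma>, l, r) \<in> transitions S", OF tr uniq])
  thus ?thesis unfolding tlook_def using ex by simp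
qed

lemma srt_step_char:
  assumes wf: "srt_wf S" and det: "srt_deterministic S" and len: "length R = nregs S"
  shows "srt_step S (q, R) (\<sigma>, d) (\<gamma>, e) (q', R') \<longleftrightarrow>
    (\<exists>m u. tlook (transitions S) q \<sigma> (map (\<lambda>i. cmpof d (R ! i)) [0..<nregs S]) = Some (m, u, \<gamma>, q')
       \<and> R' = map (\<lambda>i. upd_val (m ! i) d (R ! i)) [0..<nregs S] \<and> e = R' ! u)"
proof
  assume "srt_step S (q, R) (\<sigma>, d) (\<gamma>, e) (q', R')"
  then obtain l m u where tr: "(q, \<sigma>, l, m, u, \<gamma>, q') \<in> transitions S"
    and L: "\<forall>i < nregs S. cmp_ok (l ! i) d (R ! i)"
    and R': "R' = map (\<lambda>i. upd_val (m ! i) d (R ! i)) [0..<nregs S]" and e: "e = R' ! u"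
    unfolding srt_step_def by auto
  have "length l = nregs S" using wf tr unfolding srt_wf_def by fastforce
  hence "l = map (\<lambda>i. cmpof d (R ! i)) [0..<nregs S]"
    by (intro nth_equalityI) (use L in \<open>auto simp: cmp_ok_iff\<close>)
  thus "\<exists>m u. tlook (transitions S) q \<sigma> (map (\<lambda>i. cmpof d (R ! i)) [0..<nregs S]) = Some (m, u, \<gamma>, q')
       \<and> R' = map (\<lambda>i. upd_val (m ! i) d (R ! i)) [0..<nregs S] \<and> e = R' ! u"
    using tlook_det[OF det tr] R' e by auto
next
  assume "\<exists>m u. tlook (transitions S) q \<sigma> (map (\<lambda>i. cmpof d (R ! i)) [0..<nregs S]) = Some (m, u, \<gamma>, q')
       \<and> R' = map (\<lambda>i. upd_val (m ! i) d (R ! i)) [0..<nregs S] \<and> e = R' ! u"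
  then obtain m u where t: "tlook (transitions S) q \<sigma> (map (\<lambda>i. cmpof d (R ! i)) [0..<nregs S]) = Some (m, u, \<gamma>, q')"
    and R': "R' = map (\<lambda>i. upd_val (m ! i) d (R ! i)) [0..<nregs S]" and e: "e = R' ! u" by blast
  show "srt_step S (q, R) (\<sigma>, d) (\<gamma>, e) (q', R')"
  proof -
    have A: "(q, \<sigma>, map (\<lambda>i. cmpof d (R ! i)) [0..<nregs S], m, u, \<gamma>, q') \<in> transitions S"
      by (rule tlook_some[OF t])
    have B: "\<forall>i < nregs S. cmp_ok (map (\<lambda>i. cmpof d (R ! i)) [0..<nregs S] ! i) d (R ! i)"
      by (simp add: cmp_ok_iff)
    show ?thesis unfolding srt_step_def fst_conv snd_conv
      by (rule exI[of _ "map (\<lambda>i. cmpof d (R ! i)) [0..<nregs S]"], rule exI[of _ m], rule exI[of _ u])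
         (intro conjI A B len R' e)
  qed
qed

lemma tlook_wf:
  assumes wf: "srt_wf S" and af: "srt_add_free S"
    and t: "tlook (transitions S) q \<sigma> l = Some (m, u, \<gamma>, q')"
  shows "q' \<in> states S \<and> u < nregs S \<and> length m = nregs S \<and> (\<forall>i < nregs S. m ! i \<noteq> UAdd)"
proof -
  have tr: "(q, \<sigma>, l, m, u, \<gamma>, q') \<in> transitions S" by (rule tlook_some[OF t])
  have "set m \<subseteq> {UOld, UNew}" using af tr unfolding srt_add_free_def by fastforce
  moreover have "q' \<in> states S \<and> u < nregs S \<and> length m = nregs S"
    using wf tr unfolding srt_wf_def by fastforce
  moreover have "\<forall>i < nregs S. m ! i \<noteq> UAdd"
  proof (intro allI impI)
    fix i assume "i < nregs S"
    hence "m ! i \<in> set m" using calculation by simp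
    thus "m ! i \<noteq> UAdd" using calculation(1) by auto
  qed
  ultimately show ?thesis by blast
qed

lemma upd_val_selv:
  "m \<noteq> UAdd \<Longrightarrow> i < length R \<Longrightarrow> upd_val m d (R ! i) = selv d (R @ R2) (if m = UNew then None else Some i)"
  by (cases m) (auto simp: selv_def nth_append)

lemma upd_val_selv2:
  "m \<noteq> UAdd \<Longrightarrow> i < length R2 \<Longrightarrow> upd_val m d (R2 ! i) = selv d (R @ R2) (if m = UNew then None else Some (length R + i))"
  by (cases m) (auto simp: selv_def nth_append)

lemma srt_run_len: "srt_run S c s t \<Longrightarrow> length s = length t"
  by (induction S c s t rule: srt_run.induct) auto

lemma adrm_run_len: "adrm_run M c s t \<Longrightarrow> length s = length t"
  by (induction M c s t rule: adrm_run.induct) auto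

lemma srt_sem_mem: assumes L: "length s = length t" shows "zip s t \<in> srt_sem S \<longleftrightarrow> srt_run S (init_state S, init_regs S) s t"
proof
  assume "zip s t \<in> srt_sem S"
  then obtain s' t' where A: "zip s t = zip s' t'" "length s' = length t'" "srt_run S (init_state S, init_regs S) s' t'"
    unfolding srt_sem_def by blast
  have "s = s' \<and> t = t'" by (rule zip_inj[OF L A(2) A(1)])
  thus "srt_run S (init_state S, init_regs S) s t" using A(3) by simp
next
  assume "srt_run S (init_state S, init_regs S) s t"
  thus "zip s t \<in> srt_sem S" using L unfolding srt_sem_def by blast
qed

lemma adrm_sem_mem: assumes L: "length s = length t" shows "zip s t \<in> adrm_sem M \<longleftrightarrow> adrm_run M (aq0 M, aV0 M) s t"
proof
  assume "zip s t \<in> adrm_sem M"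
  then obtain s' t' where A: "zip s t = zip s' t'" "length s' = length t'" "adrm_run M (aq0 M, aV0 M) s' t'"
    unfolding adrm_sem_def by blast
  have "s = s' \<and> t = t'" by (rule zip_inj[OF L A(2) A(1)])
  thus "adrm_run M (aq0 M, aV0 M) s t" using A(3) by simp
next
  assume "adrm_run M (aq0 M, aV0 M) s t"
  thus "zip s t \<in> adrm_sem M" using L unfolding adrm_sem_def by blast
qed

lemma list_split_eq:
  assumes "length A = k1" "length B = k2"
  shows "xs = A @ B \<longleftrightarrow> length xs = k1 + k2 \<and> (\<forall>i < k1. xs ! i = A ! i) \<and> (\<forall>j < k2. xs ! (k1 + j) = B ! j)"
proof
  assume "xs = A @ B" thus "length xs = k1 + k2 \<and> (\<forall>i < k1. xs ! i = A ! i) \<and> (\<forall>j < k2. xs ! (k1 + j) = B ! j)"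
    using assms by (simp add: nth_append)
next
  assume h: "length xs = k1 + k2 \<and> (\<forall>i < k1. xs ! i = A ! i) \<and> (\<forall>j < k2. xs ! (k1 + j) = B ! j)"
  show "xs = A @ B"
  proof (rule nth_equalityI)
    show "length xs = length (A @ B)" using h assms by simp
    fix i assume "i < length xs"
    show "xs ! i = (A @ B) ! i"
    proof (cases "i < k1")
      case True
      hence "xs ! i = A ! i" using h by blast
      thus ?thesis using True assms(1) by (simp add: nth_append)
    next
      case False
      have "length xs = k1 + k2" using h by blast
      hence "i - k1 < k2" using \<open>i < length xs\<close> False by linarith
      hence "xs ! (k1 + (i - k1)) = B ! (i - k1)" using h by blast
      thus ?thesis using False assms(1) by (simp add: nth_append)
    qed
  qed
qed



definition oeq :: "(nat \<Rightarrow> nat \<Rightarrow> cmp) \<Rightarrow> (nat \<Rightarrow> cmp) \<Rightarrow> nat option \<Rightarrow> nat option \<Rightarrow> bool" where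
  "oeq c g o1 o2 = (case o1 of None \<Rightarrow> (case o2 of None \<Rightarrow> True | Some j \<Rightarrow> g j = CEq)
                     | Some i \<Rightarrow> (case o2 of None \<Rightarrow> g i = CEq | Some j \<Rightarrow> c i j = CEq))"

lemma oeq_iff:
  assumes "\<And>i. o1 = Some i \<Longrightarrow> i < n" "\<And>j. o2 = Some j \<Longrightarrow> j < n"
  shows "oeq (acL n R) (agL n R d) o1 o2 \<longleftrightarrow> selv d R o1 = selv d R o2"
  using assms by (cases o1; cases o2) (auto simp: oeq_def acL_def agL_def selv_def cmpof_eq)

definition uidx :: "upd list \<Rightarrow> nat \<Rightarrow> nat \<Rightarrow> nat option" where
  "uidx m i k = (if m ! i = UNew then None else Some k)"

definition inter_M :: "('a, 'b, 'd) srt \<Rightarrow> ('a, 'b, 'd) srt \<Rightarrow> (nat \<times> nat, 'a, 'b, 'd) adrm" where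
  "inter_M S1 S2 = \<lparr>aQ = states S1 \<times> states S2, aq0 = (init_state S1, init_state S2),
     an = nregs S1 + nregs S2, aV0 = init_regs S1 @ init_regs S2,
     adelta = (\<lambda>q \<sigma> c g.
       case tlook (transitions S1) (fst q) \<sigma> (map g [0..<nregs S1]) of None \<Rightarrow> None
       | Some (m1, u1, \<gamma>1, q1') \<Rightarrow>
         (case tlook (transitions S2) (snd q) \<sigma> (map (\<lambda>j. g (nregs S1 + j)) [0..<nregs S2]) of None \<Rightarrow> None
          | Some (m2, u2, \<gamma>2, q2') \<Rightarrow>
            (if \<gamma>1 = \<gamma>2 \<and> oeq c g (uidx m1 u1 u1) (uidx m2 u2 (nregs S1 + u2))
             then Some ((q1', q2'), \<gamma>1,
                (\<lambda>i. if i < nregs S1 then uidx m1 i i else uidx m2 (i - nregs S1) i), uidx m1 u1 u1)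
             else None)))\<rparr>"

lemma agL_split:
  assumes "length R1 = k1" "length R2 = k2"
  shows "map (agL (k1 + k2) (R1 @ R2) d) [0..<k1] = map (\<lambda>i. cmpof d (R1 ! i)) [0..<k1]"
    and "map (\<lambda>j. agL (k1 + k2) (R1 @ R2) d (k1 + j)) [0..<k2] = map (\<lambda>i. cmpof d (R2 ! i)) [0..<k2]"
  using assms by (auto simp: agL_def nth_append)

lemma selv1: "m \<noteq> UAdd \<Longrightarrow> i < length R1 \<Longrightarrow> selv d (R1 @ R2) (if m = UNew then None else Some i) = upd_val m d (R1 ! i)"
  by (cases m) (auto simp: selv_def nth_append)

lemma selv2: "m \<noteq> UAdd \<Longrightarrow> j < length R2 \<Longrightarrow> selv d (R1 @ R2) (if m = UNew then None else Some (length R1 + j)) = upd_val m d (R2 ! j)"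
  by (cases m) (auto simp: selv_def nth_append)

lemma selv_uidx1: "m ! i \<noteq> UAdd \<Longrightarrow> i < length R1 \<Longrightarrow> selv d (R1 @ R2) (uidx m i i) = upd_val (m ! i) d (R1 ! i)"
  by (cases "m ! i") (auto simp: uidx_def selv_def nth_append)

lemma selv_uidx2: "m ! j \<noteq> UAdd \<Longrightarrow> j < length R2 \<Longrightarrow> k = length R1 \<Longrightarrow>
   selv d (R1 @ R2) (uidx m j (k + j)) = upd_val (m ! j) d (R2 ! j)"
  by (cases "m ! j") (auto simp: uidx_def selv_def nth_append)

lemma updmap_split:
  assumes l1: "length R1 = k1" and l2: "length R2 = k2"
    and m1: "\<forall>i < k1. m1 ! i \<noteq> UAdd" and m2: "\<forall>i < k2. m2 ! i \<noteq> UAdd"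
  shows "map (\<lambda>i. selv d (R1 @ R2) (if i < k1 then uidx m1 i i else uidx m2 (i - k1) i)) [0..<k1 + k2]
       = map (\<lambda>i. upd_val (m1 ! i) d (R1 ! i)) [0..<k1] @ map (\<lambda>i. upd_val (m2 ! i) d (R2 ! i)) [0..<k2]"
proof -
  let ?xs = "map (\<lambda>i. selv d (R1 @ R2) (if i < k1 then uidx m1 i i else uidx m2 (i - k1) i)) [0..<k1 + k2]"
  have LA: "length (map (\<lambda>i. upd_val (m1 ! i) d (R1 ! i)) [0..<k1]) = k1" by simp
  have LB: "length (map (\<lambda>i. upd_val (m2 ! i) d (R2 ! i)) [0..<k2]) = k2" by simp
  show ?thesis
  proof (rule iffD2[OF list_split_eq[OF LA LB]], intro conjI allI impI)
    show "length ?xs = k1 + k2" by simp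
    fix i assume i: "i < k1"
    have "?xs ! i = selv d (R1 @ R2) (uidx m1 i i)" using i by simp
    also have "\<dots> = upd_val (m1 ! i) d (R1 ! i)" by (rule selv_uidx1) (use i m1 l1 in auto)
    also have "\<dots> = map (\<lambda>i. upd_val (m1 ! i) d (R1 ! i)) [0..<k1] ! i" using i by simp
    finally show "?xs ! i = map (\<lambda>i. upd_val (m1 ! i) d (R1 ! i)) [0..<k1] ! i" .
  next
    fix j assume j: "j < k2"
    have "?xs ! (k1 + j) = selv d (R1 @ R2) (uidx m2 j (k1 + j))" using j by simp
    also have "\<dots> = upd_val (m2 ! j) d (R2 ! j)" by (rule selv_uidx2) (use j m2 l1 l2 in auto)
    also have "\<dots> = map (\<lambda>i. upd_val (m2 ! i) d (R2 ! i)) [0..<k2] ! j" using j by simp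
    finally show "?xs ! (k1 + j) = map (\<lambda>i. upd_val (m2 ! i) d (R2 ! i)) [0..<k2] ! j" .
  qed
qed

context
  fixes S1 S2 :: "('a, 'b, 'd::{linorder, group_add}) srt"
  assumes wf1: "srt_wf S1" and det1: "srt_deterministic S1" and af1: "srt_add_free S1"
    and wf2: "srt_wf S2" and det2: "srt_deterministic S2" and af2: "srt_add_free S2"
begin

lemma inter_step:
  assumes l1: "length R1 = nregs S1" and l2: "length R2 = nregs S2"
  shows "adrm_step (inter_M S1 S2) ((q1, q2), R1 @ R2) (\<sigma>, d) (\<gamma>, e) c' \<longleftrightarrow>
    (\<exists>q1' q2' R1' R2'. c' = ((q1', q2'), R1' @ R2') \<and> srt_step S1 (q1, R1) (\<sigma>, d) (\<gamma>, e) (q1', R1')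
        \<and> srt_step S2 (q2, R2) (\<sigma>, d) (\<gamma>, e) (q2', R2'))"
proof -
  let ?k1 = "nregs S1" and ?k2 = "nregs S2" and ?R = "R1 @ R2"
  let ?L1 = "map (\<lambda>i. cmpof d (R1 ! i)) [0..<?k1]" and ?L2 = "map (\<lambda>i. cmpof d (R2 ! i)) [0..<?k2]"
  have ag: "map (agL (?k1 + ?k2) ?R d) [0..<?k1] = ?L1"
     "map (\<lambda>j. agL (?k1 + ?k2) ?R d (?k1 + j)) [0..<?k2] = ?L2"
    using agL_split[OF l1 l2] by auto
  show ?thesis
  proof
    assume "adrm_step (inter_M S1 S2) ((q1, q2), ?R) (\<sigma>, d) (\<gamma>, e) c'"
    then obtain f out where dl: "adelta (inter_M S1 S2) (q1, q2) \<sigma> (acL (?k1 + ?k2) ?R) (agL (?k1 + ?k2) ?R d)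
          = Some (fst c', \<gamma>, f, out)"
      and Rc: "snd c' = map (\<lambda>i. selv d ?R (f i)) [0..<?k1 + ?k2]" and e: "e = selv d ?R out"
      unfolding adrm_step_def by (auto simp: inter_M_def)
    obtain m1 u1 \<gamma>1 q1' where t1: "tlook (transitions S1) q1 \<sigma> ?L1 = Some (m1, u1, \<gamma>1, q1')"
      using dl by (auto simp: inter_M_def ag split: option.splits)
    obtain m2 u2 \<gamma>2 q2' where t2: "tlook (transitions S2) q2 \<sigma> ?L2 = Some (m2, u2, \<gamma>2, q2')"
      using dl t1 by (auto simp: inter_M_def ag split: option.splits)
    have c: "\<gamma>1 = \<gamma>2" "oeq (acL (?k1 + ?k2) ?R) (agL (?k1 + ?k2) ?R d) (uidx m1 u1 u1) (uidx m2 u2 (?k1 + u2))"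
      and fe: "fst c' = (q1', q2')" "\<gamma> = \<gamma>1" "f = (\<lambda>i. if i < ?k1 then uidx m1 i i else uidx m2 (i - ?k1) i)"
        "out = uidx m1 u1 u1"
      using dl t1 t2 by (auto simp: inter_M_def ag split: if_splits)
    have w1: "u1 < ?k1" "\<forall>i < ?k1. m1 ! i \<noteq> UAdd" using tlook_wf[OF wf1 af1 t1] by auto
    have w2: "u2 < ?k2" "\<forall>i < ?k2. m2 ! i \<noteq> UAdd" using tlook_wf[OF wf2 af2 t2] by auto
    define R1' where "R1' = map (\<lambda>i. upd_val (m1 ! i) d (R1 ! i)) [0..<?k1]"
    define R2' where "R2' = map (\<lambda>i. upd_val (m2 ! i) d (R2 ! i)) [0..<?k2]"
    have sc: "snd c' = R1' @ R2'" unfolding Rc fe R1'_def R2'_def by (rule updmap_split[OF l1 l2 w1(2) w2(2)])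
    have "selv d ?R (uidx m1 u1 u1) = upd_val (m1 ! u1) d (R1 ! u1)"
      by (rule selv_uidx1) (use w1 l1 in auto)
    hence e1: "e = R1' ! u1" using e fe w1 unfolding R1'_def by simp
    have "selv d ?R (uidx m1 u1 u1) = selv d ?R (uidx m2 u2 (?k1 + u2))"
      using c(2) oeq_iff[of "uidx m1 u1 u1" "?k1 + ?k2" "uidx m2 u2 (?k1 + u2)"] w1 w2
      by (auto simp: uidx_def split: if_splits)
    moreover have "selv d ?R (uidx m2 u2 (?k1 + u2)) = upd_val (m2 ! u2) d (R2 ! u2)"
      by (rule selv_uidx2) (use w2 l1 l2 in auto)
    ultimately have e2: "e = R2' ! u2" using e fe w2 unfolding R2'_def by simp
    have s1: "srt_step S1 (q1, R1) (\<sigma>, d) (\<gamma>, e) (q1', R1')"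
      using srt_step_char[OF wf1 det1 l1] t1 e1 fe(2) R1'_def by blast
    have s2: "srt_step S2 (q2, R2) (\<sigma>, d) (\<gamma>, e) (q2', R2')"
      using srt_step_char[OF wf2 det2 l2] t2 e2 fe(2) c(1) R2'_def by blast
    show "\<exists>q1' q2' R1' R2'. c' = ((q1', q2'), R1' @ R2') \<and> srt_step S1 (q1, R1) (\<sigma>, d) (\<gamma>, e) (q1', R1')
        \<and> srt_step S2 (q2, R2) (\<sigma>, d) (\<gamma>, e) (q2', R2')"
      using s1 s2 sc fe(1) by (metis prod.collapse)
  next
    assume "\<exists>q1' q2' R1' R2'. c' = ((q1', q2'), R1' @ R2') \<and> srt_step S1 (q1, R1) (\<sigma>, d) (\<gamma>, e) (q1', R1')
        \<and> srt_step S2 (q2, R2) (\<sigma>, d) (\<gamma>, e) (q2', R2')"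
    then obtain q1' q2' R1' R2' where ce: "c' = ((q1', q2'), R1' @ R2')"
      and s1: "srt_step S1 (q1, R1) (\<sigma>, d) (\<gamma>, e) (q1', R1')"
      and s2: "srt_step S2 (q2, R2) (\<sigma>, d) (\<gamma>, e) (q2', R2')" by blast
    obtain m1 u1 where t1: "tlook (transitions S1) q1 \<sigma> ?L1 = Some (m1, u1, \<gamma>, q1')"
      and R1': "R1' = map (\<lambda>i. upd_val (m1 ! i) d (R1 ! i)) [0..<?k1]" and e1: "e = R1' ! u1"
      using s1 srt_step_char[OF wf1 det1 l1] by blast
    obtain m2 u2 where t2: "tlook (transitions S2) q2 \<sigma> ?L2 = Some (m2, u2, \<gamma>, q2')"
      and R2': "R2' = map (\<lambda>i. upd_val (m2 ! i) d (R2 ! i)) [0..<?k2]" and e2: "e = R2' ! u2"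
      using s2 srt_step_char[OF wf2 det2 l2] by blast
    have w1: "u1 < ?k1" "\<forall>i < ?k1. m1 ! i \<noteq> UAdd" using tlook_wf[OF wf1 af1 t1] by auto
    have w2: "u2 < ?k2" "\<forall>i < ?k2. m2 ! i \<noteq> UAdd" using tlook_wf[OF wf2 af2 t2] by auto
    have "selv d ?R (uidx m1 u1 u1) = upd_val (m1 ! u1) d (R1 ! u1)"
      by (rule selv_uidx1) (use w1 l1 in auto)
    hence v1: "e = selv d ?R (uidx m1 u1 u1)" using e1 w1 unfolding R1' by simp
    have "selv d ?R (uidx m2 u2 (?k1 + u2)) = upd_val (m2 ! u2) d (R2 ! u2)"
      by (rule selv_uidx2) (use w2 l1 l2 in auto)
    hence v2: "e = selv d ?R (uidx m2 u2 (?k1 + u2))"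
      using e2 w2 unfolding R2' by simp
    have oe: "oeq (acL (?k1 + ?k2) ?R) (agL (?k1 + ?k2) ?R d) (uidx m1 u1 u1) (uidx m2 u2 (?k1 + u2))"
      using oeq_iff[of "uidx m1 u1 u1" "?k1 + ?k2" "uidx m2 u2 (?k1 + u2)"] w1 w2 v1 v2
      by (auto simp: uidx_def split: if_splits)
    have dl: "adelta (inter_M S1 S2) (q1, q2) \<sigma> (acL (?k1 + ?k2) ?R) (agL (?k1 + ?k2) ?R d)
          = Some ((q1', q2'), \<gamma>, (\<lambda>i. if i < ?k1 then uidx m1 i i else uidx m2 (i - ?k1) i), uidx m1 u1 u1)"
      using t1 t2 oe by (simp add: inter_M_def ag)
    have EL: "R1' @ R2' = map (\<lambda>i. selv d ?R (if i < ?k1 then uidx m1 i i else uidx m2 (i - ?k1) i)) [0..<?k1 + ?k2]"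
      unfolding R1' R2' by (rule updmap_split[OF l1 l2 w1(2) w2(2), symmetric])
    have an: "an (inter_M S1 S2) = ?k1 + ?k2" by (simp add: inter_M_def)
    have LR: "length ?R = ?k1 + ?k2" using l1 l2 by simp
    show "adrm_step (inter_M S1 S2) ((q1, q2), ?R) (\<sigma>, d) (\<gamma>, e) c'"
      unfolding adrm_step_def ce fst_conv snd_conv an
      by (rule conjI[OF LR], rule exI[of _ "\<lambda>i. if i < ?k1 then uidx m1 i i else uidx m2 (i - ?k1) i"],
          rule exI[of _ "uidx m1 u1 u1"]) (intro conjI dl v1 EL)
  qed
qed

lemma step_len: "srt_step S c x y c' \<Longrightarrow> length (snd c') = nregs S"
  unfolding srt_step_def by auto

lemma inter_run:
  "length R1 = nregs S1 \<Longrightarrow> length R2 = nregs S2 \<Longrightarrow>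
   adrm_run (inter_M S1 S2) ((q1, q2), R1 @ R2) s t \<longleftrightarrow> srt_run S1 (q1, R1) s t \<and> srt_run S2 (q2, R2) s t"
proof (induction s arbitrary: q1 q2 R1 R2 t)
  case Nil
  then show ?case by (cases t) auto
next
  case (Cons x s)
  note IH = Cons.IH and L = Cons.prems
  obtain \<sigma> d where xe: "x = (\<sigma>, d)" by (cases x) auto
  show ?case
  proof (cases t)
    case Nil
    then show ?thesis by simp
  next
    case (Cons y t')
    note te = this
    obtain \<gamma> e where ye: "y = (\<gamma>, e)" by (cases y) auto
    have st: "\<And>c'. adrm_step (inter_M S1 S2) ((q1, q2), R1 @ R2) x y c' \<longleftrightarrow>
      (\<exists>q1' q2' R1' R2'. c' = ((q1', q2'), R1' @ R2') \<and> srt_step S1 (q1, R1) x y (q1', R1')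
        \<and> srt_step S2 (q2, R2) x y (q2', R2'))"
      using inter_step[OF L] xe ye by simp
    have "adrm_run (inter_M S1 S2) ((q1, q2), R1 @ R2) (x # s) t \<longleftrightarrow>
      (\<exists>c'. adrm_step (inter_M S1 S2) ((q1, q2), R1 @ R2) x y c' \<and> adrm_run (inter_M S1 S2) c' s t')"
      using te by simp
    also have "\<dots> \<longleftrightarrow> (\<exists>q1' q2' R1' R2'. srt_step S1 (q1, R1) x y (q1', R1') \<and> srt_step S2 (q2, R2) x y (q2', R2')
         \<and> adrm_run (inter_M S1 S2) ((q1', q2'), R1' @ R2') s t')"
      unfolding st by blast
    also have "\<dots> \<longleftrightarrow> (\<exists>q1' q2' R1' R2'. srt_step S1 (q1, R1) x y (q1', R1') \<and> srt_step S2 (q2, R2) x y (q2', R2')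
         \<and> srt_run S1 (q1', R1') s t' \<and> srt_run S2 (q2', R2') s t')"
    proof -
      have "\<And>q1' q2' R1' R2'. srt_step S1 (q1, R1) x y (q1', R1') \<Longrightarrow> srt_step S2 (q2, R2) x y (q2', R2') \<Longrightarrow>
         adrm_run (inter_M S1 S2) ((q1', q2'), R1' @ R2') s t' \<longleftrightarrow> srt_run S1 (q1', R1') s t' \<and> srt_run S2 (q2', R2') s t'"
        using IH step_len by (metis snd_conv)
      thus ?thesis by blast
    qed
    also have "\<dots> \<longleftrightarrow> srt_run S1 (q1, R1) (x # s) t \<and> srt_run S2 (q2, R2) (x # s) t"
    proof -
      have "srt_run S1 (q1, R1) (x # s) t \<longleftrightarrow> (\<exists>c. srt_step S1 (q1, R1) x y c \<and> srt_run S1 c s t')"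
        "srt_run S2 (q2, R2) (x # s) t \<longleftrightarrow> (\<exists>c. srt_step S2 (q2, R2) x y c \<and> srt_run S2 c s t')"
        using te by simp_all
      thus ?thesis by auto
    qed
    finally show ?thesis .
  qed
qed

lemma inter_wf: "adrm_wf (inter_M S1 S2)"
proof -
  have b: "finite (states S1)" "finite (states S2)" "init_state S1 \<in> states S1" "init_state S2 \<in> states S2"
    "length (init_regs S1) = nregs S1" "length (init_regs S2) = nregs S2"
    using wf1 wf2 unfolding srt_wf_def by auto
  have d: "\<forall>q \<in> aQ (inter_M S1 S2). \<forall>\<sigma> cL gL q' \<gamma> f out. adelta (inter_M S1 S2) q \<sigma> cL gL = Some (q', \<gamma>, f, out) \<longrightarrow>
        q' \<in> aQ (inter_M S1 S2) \<and> (\<forall>i < an (inter_M S1 S2). \<forall>j. f i = Some j \<longrightarrow> j < an (inter_M S1 S2))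
        \<and> (\<forall>j. out = Some j \<longrightarrow> j < an (inter_M S1 S2))"
  proof (intro ballI allI impI)
    fix q \<sigma> cL gL q' \<gamma> f out
    assume dl: "adelta (inter_M S1 S2) q \<sigma> cL gL = Some (q', \<gamma>, f, out)"
    obtain m1 u1 \<gamma>1 q1' where t1: "tlook (transitions S1) (fst q) \<sigma> (map gL [0..<nregs S1]) = Some (m1, u1, \<gamma>1, q1')"
      using dl by (auto simp: inter_M_def split: option.splits)
    obtain m2 u2 \<gamma>2 q2' where t2: "tlook (transitions S2) (snd q) \<sigma> (map (\<lambda>j. gL (nregs S1 + j)) [0..<nregs S2]) = Some (m2, u2, \<gamma>2, q2')"
      using dl t1 by (auto simp: inter_M_def split: option.splits)
    have e: "q' = (q1', q2')" "f = (\<lambda>i. if i < nregs S1 then uidx m1 i i else uidx m2 (i - nregs S1) i)"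
       "out = uidx m1 u1 u1"
      using dl t1 t2 by (auto simp: inter_M_def split: if_splits)
    have w1: "q1' \<in> states S1" "u1 < nregs S1" using tlook_wf[OF wf1 af1 t1] by auto
    have w2: "q2' \<in> states S2" "u2 < nregs S2" using tlook_wf[OF wf2 af2 t2] by auto
    have A: "q' \<in> aQ (inter_M S1 S2)" using e w1 w2 by (simp add: inter_M_def)
    have B: "\<forall>j. out = Some j \<longrightarrow> j < an (inter_M S1 S2)" using e w1 by (simp add: inter_M_def uidx_def)
    have C: "\<forall>i < an (inter_M S1 S2). \<forall>j. f i = Some j \<longrightarrow> j < an (inter_M S1 S2)"
      using e by (simp add: inter_M_def uidx_def)
    show "q' \<in> aQ (inter_M S1 S2) \<and> (\<forall>i < an (inter_M S1 S2). \<forall>j. f i = Some j \<longrightarrow> j < an (inter_M S1 S2))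
        \<and> (\<forall>j. out = Some j \<longrightarrow> j < an (inter_M S1 S2))" using A B C by blast
  qed
  have s: "aQ (inter_M S1 S2) = states S1 \<times> states S2" "aq0 (inter_M S1 S2) = (init_state S1, init_state S2)"
    "an (inter_M S1 S2) = nregs S1 + nregs S2" "aV0 (inter_M S1 S2) = init_regs S1 @ init_regs S2"
    by (simp_all add: inter_M_def)
  show ?thesis unfolding adrm_wf_def
    by (intro conjI d) (simp_all only: s b finite_SigmaI mem_Sigma_iff length_append simp_thms)
qed

lemma inter_sem: "adrm_sem (inter_M S1 S2) = srt_sem S1 \<inter> srt_sem S2"
proof -
  have l: "length (init_regs S1) = nregs S1" "length (init_regs S2) = nregs S2"
    using wf1 wf2 unfolding srt_wf_def by auto
  have ir: "\<And>s t. adrm_run (inter_M S1 S2) (aq0 (inter_M S1 S2), aV0 (inter_M S1 S2)) s t \<longleftrightarrow>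
      srt_run S1 (init_state S1, init_regs S1) s t \<and> srt_run S2 (init_state S2, init_regs S2) s t"
    using inter_run[OF l] by (simp add: inter_M_def)
  show ?thesis
  proof (intro set_eqI iffI)
    fix x assume "x \<in> adrm_sem (inter_M S1 S2)"
    then obtain s t where x: "x = zip s t" "length s = length t"
      "adrm_run (inter_M S1 S2) (aq0 (inter_M S1 S2), aV0 (inter_M S1 S2)) s t"
      unfolding adrm_sem_def by blast
    thus "x \<in> srt_sem S1 \<inter> srt_sem S2" using ir srt_semI by blast
  next
    fix x assume a: "x \<in> srt_sem S1 \<inter> srt_sem S2"
    then obtain s t where x: "x = zip s t" "length s = length t"
      "srt_run S1 (init_state S1, init_regs S1) s t"
      unfolding srt_sem_def by blast
    have "srt_run S2 (init_state S2, init_regs S2) s t" using a x srt_sem_mem[OF x(2)] by blast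
    thus "x \<in> adrm_sem (inter_M S1 S2)" using x ir adrm_sem_mem[OF x(2)] by blast
  qed
qed

end



definition comp_M :: "('a, 'b, 'd) srt \<Rightarrow> ('b, 'c, 'd) srt \<Rightarrow> (nat \<times> nat, 'a, 'c, 'd) adrm" where
  "comp_M S1 S2 = \<lparr>aQ = states S1 \<times> states S2, aq0 = (init_state S1, init_state S2),
     an = nregs S1 + nregs S2, aV0 = init_regs S1 @ init_regs S2,
     adelta = (\<lambda>q \<sigma> c g.
       case tlook (transitions S1) (fst q) \<sigma> (map g [0..<nregs S1]) of None \<Rightarrow> None
       | Some (m1, u1, \<gamma>, q1') \<Rightarrow>
         (case tlook (transitions S2) (snd q) \<gamma>
                (map (\<lambda>j. case uidx m1 u1 u1 of None \<Rightarrow> g (nregs S1 + j) | Some i \<Rightarrow> c i (nregs S1 + j)) [0..<nregs S2])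
          of None \<Rightarrow> None
          | Some (m2, u2, \<theta>, q2') \<Rightarrow>
            Some ((q1', q2'), \<theta>,
                (\<lambda>i. if i < nregs S1 then uidx m1 i i
                     else if m2 ! (i - nregs S1) = UNew then uidx m1 u1 u1 else Some i),
                (if m2 ! u2 = UNew then uidx m1 u1 u1 else Some (nregs S1 + u2)))))\<rparr>"

lemma comp_M_simps:
  "aQ (comp_M S1 S2) = states S1 \<times> states S2" "aq0 (comp_M S1 S2) = (init_state S1, init_state S2)"
  "an (comp_M S1 S2) = nregs S1 + nregs S2" "aV0 (comp_M S1 S2) = init_regs S1 @ init_regs S2"
  by (simp_all add: comp_M_def)

lemma L2_eq:
  assumes l1: "length R1 = k1" and l2: "length R2 = k2" and o1: "\<And>i. o1 = Some i \<Longrightarrow> i < k1"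
  shows "map (\<lambda>j. case o1 of None \<Rightarrow> agL (k1 + k2) (R1 @ R2) d (k1 + j) | Some i \<Rightarrow> acL (k1 + k2) (R1 @ R2) i (k1 + j)) [0..<k2]
       = map (\<lambda>j. cmpof (selv d (R1 @ R2) o1) (R2 ! j)) [0..<k2]"
proof (cases o1)
  case None thus ?thesis using l1 l2 by (auto simp: agL_def selv_def nth_append)
next
  case (Some i) thus ?thesis using l1 l2 o1[OF Some] by (auto simp: acL_def selv_def nth_append)
qed

lemma selv_comp2:
  "m ! j \<noteq> UAdd \<Longrightarrow> j < length R2 \<Longrightarrow> k = length R1 \<Longrightarrow>
   selv d (R1 @ R2) (if m ! j = UNew then o1 else Some (k + j)) = upd_val (m ! j) (selv d (R1 @ R2) o1) (R2 ! j)"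
  by (cases "m ! j") (auto simp: selv_def nth_append)

lemma updmap_comp:
  assumes l1: "length R1 = k1" and l2: "length R2 = k2"
    and m1: "\<forall>i < k1. m1 ! i \<noteq> UAdd" and m2: "\<forall>i < k2. m2 ! i \<noteq> UAdd"
  shows "map (\<lambda>i. selv d (R1 @ R2) (if i < k1 then uidx m1 i i else if m2 ! (i - k1) = UNew then o1 else Some i)) [0..<k1 + k2]
       = map (\<lambda>i. upd_val (m1 ! i) d (R1 ! i)) [0..<k1] @ map (\<lambda>i. upd_val (m2 ! i) (selv d (R1 @ R2) o1) (R2 ! i)) [0..<k2]"
proof -
  let ?xs = "map (\<lambda>i. selv d (R1 @ R2) (if i < k1 then uidx m1 i i else if m2 ! (i - k1) = UNew then o1 else Some i)) [0..<k1 + k2]"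
  have LA: "length (map (\<lambda>i. upd_val (m1 ! i) d (R1 ! i)) [0..<k1]) = k1" by simp
  have LB: "length (map (\<lambda>i. upd_val (m2 ! i) (selv d (R1 @ R2) o1) (R2 ! i)) [0..<k2]) = k2" by simp
  show ?thesis
  proof (rule iffD2[OF list_split_eq[OF LA LB]], intro conjI allI impI)
    show "length ?xs = k1 + k2" by simp
    fix i assume i: "i < k1"
    have "?xs ! i = selv d (R1 @ R2) (uidx m1 i i)" using i by simp
    also have "\<dots> = upd_val (m1 ! i) d (R1 ! i)" by (rule selv_uidx1) (use i m1 l1 in auto)
    also have "\<dots> = map (\<lambda>i. upd_val (m1 ! i) d (R1 ! i)) [0..<k1] ! i" using i by simp
    finally show "?xs ! i = map (\<lambda>i. upd_val (m1 ! i) d (R1 ! i)) [0..<k1] ! i" .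
  next
    fix j assume j: "j < k2"
    have "?xs ! (k1 + j) = selv d (R1 @ R2) (if m2 ! j = UNew then o1 else Some (k1 + j))" using j by simp
    also have "\<dots> = upd_val (m2 ! j) (selv d (R1 @ R2) o1) (R2 ! j)" by (rule selv_comp2) (use j m2 l1 l2 in auto)
    also have "\<dots> = map (\<lambda>i. upd_val (m2 ! i) (selv d (R1 @ R2) o1) (R2 ! i)) [0..<k2] ! j" using j by simp
    finally show "?xs ! (k1 + j) = map (\<lambda>i. upd_val (m2 ! i) (selv d (R1 @ R2) o1) (R2 ! i)) [0..<k2] ! j" .
  qed
qed

lemma step_len0: "srt_step S c x y c' \<Longrightarrow> length (snd c') = nregs S"
  unfolding srt_step_def by auto

context
  fixes S1 :: "('a, 'b, 'd::{linorder, group_add}) srt" and S2 :: "('b, 'c, 'd) srt"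
  assumes wf1: "srt_wf S1" and det1: "srt_deterministic S1" and af1: "srt_add_free S1"
    and wf2: "srt_wf S2" and det2: "srt_deterministic S2" and af2: "srt_add_free S2"
begin

lemma comp_step:
  assumes l1: "length R1 = nregs S1" and l2: "length R2 = nregs S2"
  shows "adrm_step (comp_M S1 S2) ((q1, q2), R1 @ R2) (\<sigma>, d) (\<theta>, e) c' \<longleftrightarrow>
    (\<exists>z q1' q2' R1' R2'. c' = ((q1', q2'), R1' @ R2') \<and> srt_step S1 (q1, R1) (\<sigma>, d) z (q1', R1')
        \<and> srt_step S2 (q2, R2) z (\<theta>, e) (q2', R2'))"
proof -
  let ?k1 = "nregs S1" and ?k2 = "nregs S2" and ?R = "R1 @ R2"
  let ?L1 = "map (\<lambda>i. cmpof d (R1 ! i)) [0..<?k1]"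
  have ag: "map (agL (?k1 + ?k2) ?R d) [0..<?k1] = ?L1"
    using agL_split[OF l1 l2] by auto
  have an: "an (comp_M S1 S2) = ?k1 + ?k2" by (simp add: comp_M_def)
  show ?thesis
  proof
    assume "adrm_step (comp_M S1 S2) ((q1, q2), ?R) (\<sigma>, d) (\<theta>, e) c'"
    then obtain f out where dl: "adelta (comp_M S1 S2) (q1, q2) \<sigma> (acL (?k1 + ?k2) ?R) (agL (?k1 + ?k2) ?R d)
          = Some (fst c', \<theta>, f, out)"
      and Rc: "snd c' = map (\<lambda>i. selv d ?R (f i)) [0..<?k1 + ?k2]" and e: "e = selv d ?R out"
      unfolding adrm_step_def an by auto
    obtain m1 u1 \<gamma> q1' where t1: "tlook (transitions S1) q1 \<sigma> ?L1 = Some (m1, u1, \<gamma>, q1')"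
      using dl by (auto simp: comp_M_def ag split: option.splits)
    have w1: "u1 < ?k1" "\<forall>i < ?k1. m1 ! i \<noteq> UAdd" using tlook_wf[OF wf1 af1 t1] by auto
    define o1 where "o1 = uidx m1 u1 u1"
    have o1k: "\<And>i. o1 = Some i \<Longrightarrow> i < ?k1" using w1 unfolding o1_def uidx_def by (auto split: if_splits)
    define v where "v = selv d ?R o1"
    have L2: "map (\<lambda>j. case o1 of None \<Rightarrow> agL (?k1 + ?k2) ?R d (?k1 + j) | Some i \<Rightarrow> acL (?k1 + ?k2) ?R i (?k1 + j)) [0..<?k2]
       = map (\<lambda>j. cmpof v (R2 ! j)) [0..<?k2]"
      unfolding v_def by (rule L2_eq[OF l1 l2 o1k])
    obtain m2 u2 \<theta>' q2' where t2: "tlook (transitions S2) q2 \<gamma> (map (\<lambda>j. cmpof v (R2 ! j)) [0..<?k2]) = Some (m2, u2, \<theta>', q2')"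
      using dl t1 L2 unfolding o1_def by (auto simp: comp_M_def ag split: option.splits)
    have w2: "u2 < ?k2" "\<forall>i < ?k2. m2 ! i \<noteq> UAdd" using tlook_wf[OF wf2 af2 t2] by auto
    have fe: "fst c' = (q1', q2')" "\<theta> = \<theta>'"
        "f = (\<lambda>i. if i < ?k1 then uidx m1 i i else if m2 ! (i - ?k1) = UNew then o1 else Some i)"
        "out = (if m2 ! u2 = UNew then o1 else Some (?k1 + u2))"
      using dl t1 t2 L2 unfolding o1_def by (auto simp: comp_M_def ag)
    define R1' where "R1' = map (\<lambda>i. upd_val (m1 ! i) d (R1 ! i)) [0..<?k1]"
    define R2' where "R2' = map (\<lambda>i. upd_val (m2 ! i) v (R2 ! i)) [0..<?k2]"
    have sc: "snd c' = R1' @ R2'" unfolding Rc fe R1'_def R2'_def v_def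
      by (rule updmap_comp[OF l1 l2 w1(2) w2(2)])
    have "v = upd_val (m1 ! u1) d (R1 ! u1)" unfolding v_def o1_def
      by (rule selv_uidx1) (use w1 l1 in auto)
    hence v1: "v = R1' ! u1" using w1 unfolding R1'_def by simp
    have "selv d ?R out = upd_val (m2 ! u2) v (R2 ! u2)" unfolding fe v_def
      by (rule selv_comp2) (use w2 l1 l2 in auto)
    hence e2: "e = R2' ! u2" using e w2 unfolding R2'_def by simp
    have s1: "srt_step S1 (q1, R1) (\<sigma>, d) (\<gamma>, v) (q1', R1')"
      using srt_step_char[OF wf1 det1 l1] t1 v1 R1'_def by blast
    have s2: "srt_step S2 (q2, R2) (\<gamma>, v) (\<theta>, e) (q2', R2')"
      using srt_step_char[OF wf2 det2 l2] t2 e2 fe(2) R2'_def by blast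
    have "c' = ((q1', q2'), R1' @ R2')" using sc fe(1) by (metis prod.collapse)
    thus "\<exists>z q1' q2' R1' R2'. c' = ((q1', q2'), R1' @ R2') \<and> srt_step S1 (q1, R1) (\<sigma>, d) z (q1', R1')
        \<and> srt_step S2 (q2, R2) z (\<theta>, e) (q2', R2')"
      using s1 s2 by blast
  next
    assume "\<exists>z q1' q2' R1' R2'. c' = ((q1', q2'), R1' @ R2') \<and> srt_step S1 (q1, R1) (\<sigma>, d) z (q1', R1')
        \<and> srt_step S2 (q2, R2) z (\<theta>, e) (q2', R2')"
    then obtain z q1' q2' R1' R2' where ce: "c' = ((q1', q2'), R1' @ R2')"
      and s1: "srt_step S1 (q1, R1) (\<sigma>, d) z (q1', R1')"
      and s2: "srt_step S2 (q2, R2) z (\<theta>, e) (q2', R2')" by blast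
    obtain \<gamma> v where ze: "z = (\<gamma>, v)" by (cases z) auto
    obtain m1 u1 where t1: "tlook (transitions S1) q1 \<sigma> ?L1 = Some (m1, u1, \<gamma>, q1')"
      and R1': "R1' = map (\<lambda>i. upd_val (m1 ! i) d (R1 ! i)) [0..<?k1]" and v1: "v = R1' ! u1"
      using s1 srt_step_char[OF wf1 det1 l1] ze by blast
    obtain m2 u2 where t2: "tlook (transitions S2) q2 \<gamma> (map (\<lambda>i. cmpof v (R2 ! i)) [0..<?k2]) = Some (m2, u2, \<theta>, q2')"
      and R2': "R2' = map (\<lambda>i. upd_val (m2 ! i) v (R2 ! i)) [0..<?k2]" and e2: "e = R2' ! u2"
      using s2 srt_step_char[OF wf2 det2 l2] ze by blast
    have w1: "u1 < ?k1" "\<forall>i < ?k1. m1 ! i \<noteq> UAdd" using tlook_wf[OF wf1 af1 t1] by auto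
    have w2: "u2 < ?k2" "\<forall>i < ?k2. m2 ! i \<noteq> UAdd" using tlook_wf[OF wf2 af2 t2] by auto
    define o1 where "o1 = uidx m1 u1 u1"
    have o1k: "\<And>i. o1 = Some i \<Longrightarrow> i < ?k1" using w1 unfolding o1_def uidx_def by (auto split: if_splits)
    have "selv d ?R o1 = upd_val (m1 ! u1) d (R1 ! u1)" unfolding o1_def
      by (rule selv_uidx1) (use w1 l1 in auto)
    hence vv: "v = selv d ?R o1" using v1 w1 unfolding R1' by simp
    have L2: "map (\<lambda>j. case o1 of None \<Rightarrow> agL (?k1 + ?k2) ?R d (?k1 + j) | Some i \<Rightarrow> acL (?k1 + ?k2) ?R i (?k1 + j)) [0..<?k2]
       = map (\<lambda>j. cmpof v (R2 ! j)) [0..<?k2]"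
      unfolding vv by (rule L2_eq[OF l1 l2 o1k])
    have dl: "adelta (comp_M S1 S2) (q1, q2) \<sigma> (acL (?k1 + ?k2) ?R) (agL (?k1 + ?k2) ?R d)
          = Some ((q1', q2'), \<theta>, (\<lambda>i. if i < ?k1 then uidx m1 i i else if m2 ! (i - ?k1) = UNew then o1 else Some i),
                  (if m2 ! u2 = UNew then o1 else Some (?k1 + u2)))"
      using t1 t2 L2 unfolding o1_def comp_M_def
      by (simp only: adrm.select_convs fst_conv snd_conv ag t1 t2 L2 option.case prod.case)
    have EL: "R1' @ R2' = map (\<lambda>i. selv d ?R (if i < ?k1 then uidx m1 i i else if m2 ! (i - ?k1) = UNew then o1 else Some i)) [0..<?k1 + ?k2]"
      unfolding R1' R2' vv by (rule updmap_comp[OF l1 l2 w1(2) w2(2), symmetric])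
    have "selv d ?R (if m2 ! u2 = UNew then o1 else Some (?k1 + u2)) = upd_val (m2 ! u2) v (R2 ! u2)"
      unfolding vv by (rule selv_comp2) (use w2 l1 l2 in auto)
    hence ev: "e = selv d ?R (if m2 ! u2 = UNew then o1 else Some (?k1 + u2))" using e2 w2 unfolding R2' by simp
    have LR: "length ?R = ?k1 + ?k2" using l1 l2 by simp
    show "adrm_step (comp_M S1 S2) ((q1, q2), ?R) (\<sigma>, d) (\<theta>, e) c'"
      unfolding adrm_step_def ce fst_conv snd_conv an
      by (rule conjI[OF LR], rule exI[of _ "\<lambda>i. if i < ?k1 then uidx m1 i i else if m2 ! (i - ?k1) = UNew then o1 else Some i"],
          rule exI[of _ "if m2 ! u2 = UNew then o1 else Some (?k1 + u2)"]) (intro conjI dl ev EL)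
  qed
qed

lemma srt_run_Nil: "srt_run S c [] t \<longleftrightarrow> t = []"
  by (cases t) auto

lemma srt_run_Cons: "srt_run S c (x # s) t \<longleftrightarrow> (\<exists>y t'. t = y # t' \<and> (\<exists>c'. srt_step S c x y c' \<and> srt_run S c' s t'))"
  by (cases t) auto

lemma adrm_run_Cons: "adrm_run M c (x # s) t \<longleftrightarrow> (\<exists>y t'. t = y # t' \<and> (\<exists>c'. adrm_step M c x y c' \<and> adrm_run M c' s t'))"
  by (cases t) auto

lemma comp_run:
  "length R1 = nregs S1 \<Longrightarrow> length R2 = nregs S2 \<Longrightarrow>
   adrm_run (comp_M S1 S2) ((q1, q2), R1 @ R2) s t \<longleftrightarrow> (\<exists>s3. srt_run S1 (q1, R1) s s3 \<and> srt_run S2 (q2, R2) s3 t)"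
proof (induction s arbitrary: q1 q2 R1 R2 t)
  case Nil
  then show ?case by (cases t) (auto simp: srt_run_Nil)
next
  case (Cons x s)
  note IH = Cons.IH and L = Cons.prems
  obtain \<sigma> d where xe: "x = (\<sigma>, d)" by (cases x) auto
  show ?case
  proof
    assume "adrm_run (comp_M S1 S2) ((q1, q2), R1 @ R2) (x # s) t"
    then obtain y t' c' where te: "t = y # t'" and st: "adrm_step (comp_M S1 S2) ((q1, q2), R1 @ R2) x y c'"
      and r: "adrm_run (comp_M S1 S2) c' s t'" by (auto simp: adrm_run_Cons)
    obtain \<theta> e where ye: "y = (\<theta>, e)" by (cases y) auto
    have st': "adrm_step (comp_M S1 S2) ((q1, q2), R1 @ R2) (\<sigma>, d) (\<theta>, e) c'" using st xe ye by simp
    have "\<exists>z q1' q2' R1' R2'. c' = ((q1', q2'), R1' @ R2') \<and> srt_step S1 (q1, R1) (\<sigma>, d) z (q1', R1')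
        \<and> srt_step S2 (q2, R2) z (\<theta>, e) (q2', R2')"
      by (rule comp_step[OF L, THEN iffD1, OF st'])
    then obtain z q1' q2' R1' R2' where ce: "c' = ((q1', q2'), R1' @ R2')"
      and s1: "srt_step S1 (q1, R1) (\<sigma>, d) z (q1', R1')" and s2: "srt_step S2 (q2, R2) z (\<theta>, e) (q2', R2')"
      by blast
    have "length R1' = nregs S1" "length R2' = nregs S2" using step_len0[OF s1] step_len0[OF s2] by simp_all
    then obtain s3' where r1: "srt_run S1 (q1', R1') s s3'" and r2: "srt_run S2 (q2', R2') s3' t'"
      using IH r ce by blast
    have "srt_run S1 (q1, R1) (x # s) (z # s3')" using s1 r1 xe by auto
    moreover have "srt_run S2 (q2, R2) (z # s3') t" using s2 r2 te ye by auto
    ultimately show "\<exists>s3. srt_run S1 (q1, R1) (x # s) s3 \<and> srt_run S2 (q2, R2) s3 t" by blast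
  next
    assume "\<exists>s3. srt_run S1 (q1, R1) (x # s) s3 \<and> srt_run S2 (q2, R2) s3 t"
    then obtain s3 where a1: "srt_run S1 (q1, R1) (x # s) s3" and a2: "srt_run S2 (q2, R2) s3 t" by blast
    obtain z s3' c1 where s3e: "s3 = z # s3'" and s1: "srt_step S1 (q1, R1) x z c1" and r1: "srt_run S1 c1 s s3'"
      using a1 by (auto simp: srt_run_Cons)
    obtain y t' c2 where te: "t = y # t'" and s2: "srt_step S2 (q2, R2) z y c2" and r2: "srt_run S2 c2 s3' t'"
      using a2 s3e by (auto simp: srt_run_Cons)
    obtain q1' R1' where c1e: "c1 = (q1', R1')" by (cases c1) auto
    obtain q2' R2' where c2e: "c2 = (q2', R2')" by (cases c2) auto
    obtain \<theta> e where ye: "y = (\<theta>, e)" by (cases y) auto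
    have st: "adrm_step (comp_M S1 S2) ((q1, q2), R1 @ R2) x y ((q1', q2'), R1' @ R2')"
      unfolding xe ye
      by (rule comp_step[OF L, THEN iffD2], rule exI[of _ z], intro exI conjI refl)
         (use s1 s2 xe ye c1e c2e in simp_all)
    have "length R1' = nregs S1" "length R2' = nregs S2" using step_len0[OF s1] step_len0[OF s2] c1e c2e by simp_all
    hence "adrm_run (comp_M S1 S2) ((q1', q2'), R1' @ R2') s t'" using IH r1 r2 c1e c2e by blast
    thus "adrm_run (comp_M S1 S2) ((q1, q2), R1 @ R2) (x # s) t" using st te by auto
  qed
qed

lemma comp_wf: "adrm_wf (comp_M S1 S2)"
proof -
  have b: "finite (states S1)" "finite (states S2)" "init_state S1 \<in> states S1" "init_state S2 \<in> states S2"
    "length (init_regs S1) = nregs S1" "length (init_regs S2) = nregs S2"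
    using wf1 wf2 unfolding srt_wf_def by auto
  have d: "\<forall>q \<in> aQ (comp_M S1 S2). \<forall>\<sigma> cL gL q' \<gamma> f out. adelta (comp_M S1 S2) q \<sigma> cL gL = Some (q', \<gamma>, f, out) \<longrightarrow>
        q' \<in> aQ (comp_M S1 S2) \<and> (\<forall>i < an (comp_M S1 S2). \<forall>j. f i = Some j \<longrightarrow> j < an (comp_M S1 S2))
        \<and> (\<forall>j. out = Some j \<longrightarrow> j < an (comp_M S1 S2))"
  proof (intro ballI allI impI)
    fix q \<sigma> cL gL q' \<gamma> f out
    assume dl: "adelta (comp_M S1 S2) q \<sigma> cL gL = Some (q', \<gamma>, f, out)"
    obtain m1 u1 \<gamma>1 q1' where t1: "tlook (transitions S1) (fst q) \<sigma> (map gL [0..<nregs S1]) = Some (m1, u1, \<gamma>1, q1')"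
      using dl by (auto simp: comp_M_def split: option.splits)
    obtain m2 u2 \<gamma>2 q2' where t2: "tlook (transitions S2) (snd q) \<gamma>1
       (map (\<lambda>j. case uidx m1 u1 u1 of None \<Rightarrow> gL (nregs S1 + j) | Some i \<Rightarrow> cL i (nregs S1 + j)) [0..<nregs S2])
        = Some (m2, u2, \<gamma>2, q2')"
      using dl t1 by (auto simp: comp_M_def split: option.splits)
    have e: "q' = (q1', q2')"
       "f = (\<lambda>i. if i < nregs S1 then uidx m1 i i else if m2 ! (i - nregs S1) = UNew then uidx m1 u1 u1 else Some i)"
       "out = (if m2 ! u2 = UNew then uidx m1 u1 u1 else Some (nregs S1 + u2))"
      using dl t1 t2 by (auto simp: comp_M_def)
    have w1: "q1' \<in> states S1" "u1 < nregs S1" using tlook_wf[OF wf1 af1 t1] by auto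
    have w2: "q2' \<in> states S2" "u2 < nregs S2" using tlook_wf[OF wf2 af2 t2] by auto
    have A: "q' \<in> aQ (comp_M S1 S2)" using e w1 w2 by (simp add: comp_M_simps)
    have B: "\<forall>j. out = Some j \<longrightarrow> j < an (comp_M S1 S2)" using e w1 w2 by (simp add: comp_M_simps uidx_def)
    have C: "\<forall>i < an (comp_M S1 S2). \<forall>j. f i = Some j \<longrightarrow> j < an (comp_M S1 S2)"
      using e w1 by (simp add: comp_M_simps uidx_def)
    show "q' \<in> aQ (comp_M S1 S2) \<and> (\<forall>i < an (comp_M S1 S2). \<forall>j. f i = Some j \<longrightarrow> j < an (comp_M S1 S2))
        \<and> (\<forall>j. out = Some j \<longrightarrow> j < an (comp_M S1 S2))" using A B C by blast
  qed
  show ?thesis unfolding adrm_wf_def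
    by (intro conjI d) (simp_all only: comp_M_simps b finite_SigmaI mem_Sigma_iff length_append simp_thms)
qed

lemma comp_sem: "adrm_sem (comp_M S1 S2) = transd_compose (srt_sem S1) (srt_sem S2)"
proof -
  have l: "length (init_regs S1) = nregs S1" "length (init_regs S2) = nregs S2"
    using wf1 wf2 unfolding srt_wf_def by auto
  have ir: "\<And>s t. adrm_run (comp_M S1 S2) (aq0 (comp_M S1 S2), aV0 (comp_M S1 S2)) s t \<longleftrightarrow>
      (\<exists>s3. srt_run S1 (init_state S1, init_regs S1) s s3 \<and> srt_run S2 (init_state S2, init_regs S2) s3 t)"
    using comp_run[OF l] by (simp add: comp_M_simps)
  show ?thesis
  proof (intro set_eqI iffI)
    fix x assume "x \<in> adrm_sem (comp_M S1 S2)"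
    then obtain s t where x: "x = zip s t" "length s = length t"
      "adrm_run (comp_M S1 S2) (aq0 (comp_M S1 S2), aV0 (comp_M S1 S2)) s t"
      unfolding adrm_sem_def by blast
    then obtain s3 where r: "srt_run S1 (init_state S1, init_regs S1) s s3" "srt_run S2 (init_state S2, init_regs S2) s3 t"
      using ir by blast
    have ls: "length s3 = length s" using srt_run_len[OF r(1)] by simp
    have "zip s s3 \<in> srt_sem S1" using srt_semI[OF r(1)] ls by simp
    moreover have "zip s3 t \<in> srt_sem S2" using srt_semI[OF r(2)] ls x(2) by simp
    ultimately show "x \<in> transd_compose (srt_sem S1) (srt_sem S2)"
      unfolding transd_compose_def using x(1,2) ls by blast
  next
    fix x assume "x \<in> transd_compose (srt_sem S1) (srt_sem S2)"
    then obtain s t s3 where x: "x = zip s t" "length s = length t" "length s3 = length s"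
      "zip s s3 \<in> srt_sem S1" "zip s3 t \<in> srt_sem S2"
      unfolding transd_compose_def by blast
    have r1: "srt_run S1 (init_state S1, init_regs S1) s s3" using x(4) srt_sem_mem[of s s3] x(3) by simp
    have r2: "srt_run S2 (init_state S2, init_regs S2) s3 t" using x(5) srt_sem_mem[of s3 t] x(2,3) by simp
    have "adrm_run (comp_M S1 S2) (aq0 (comp_M S1 S2), aV0 (comp_M S1 S2)) s t" using ir r1 r2 by blast
    thus "x \<in> adrm_sem (comp_M S1 S2)" using adrm_sem_mem[OF x(2)] x(1) by blast
  qed
qed

end



theorem theorem3p22:
  assumes "infinite (UNIV :: 'd::{linorder, group_add} set)"
  shows "(\<forall>T1 T2 :: (('a::finite \<times> 'd) \<times> ('b::finite \<times> 'd)) list set.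
            DSRTA_definable T1 \<and> DSRTA_definable T2 \<longrightarrow> DSRTA_definable (T1 \<inter> T2))
       \<and> (\<forall>(T1 :: (('a \<times> 'd) \<times> ('b \<times> 'd)) list set)
             (T2 :: (('b \<times> 'd) \<times> ('c::finite \<times> 'd)) list set).
            DSRTA_definable T1 \<and> DSRTA_definable T2 \<longrightarrow>
            DSRTA_definable (transd_compose T1 T2))
       \<and> (\<exists>T1 T2 :: (('a \<times> 'd) \<times> ('b \<times> 'd)) list set.
            DSRTA_definable T1 \<and> DSRTA_definable T2 \<and> \<not> DSRTA_definable (T1 \<union> T2))"
proof (intro conjI allI impI)
  fix T1 T2 :: "(('a \<times> 'd) \<times> ('b \<times> 'd)) list set"
  assume "DSRTA_definable T1 \<and> DSRTA_definable T2"
  then obtain S1 S2 :: "('a, 'b, 'd) srt" where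
    S1: "srt_wf S1" "srt_deterministic S1" "srt_add_free S1" "T1 = srt_sem S1" and
    S2: "srt_wf S2" "srt_deterministic S2" "srt_add_free S2" "T2 = srt_sem S2"
    unfolding DSRTA_definable_def by blast
  have "T1 \<inter> T2 = adrm_sem (inter_M S1 S2)"
    using inter_sem[OF S1(1-3) S2(1-3)] S1(4) S2(4) by simp
  thus "DSRTA_definable (T1 \<inter> T2)"
    using adrm_definable[OF inter_wf[OF S1(1-3) S2(1-3)]] by simp
next
  fix T1 :: "(('a \<times> 'd) \<times> ('b \<times> 'd)) list set" and T2 :: "(('b \<times> 'd) \<times> ('c \<times> 'd)) list set"
  assume "DSRTA_definable T1 \<and> DSRTA_definable T2"
  then obtain S1 :: "('a, 'b, 'd) srt" and S2 :: "('b, 'c, 'd) srt" where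
    S1: "srt_wf S1" "srt_deterministic S1" "srt_add_free S1" "T1 = srt_sem S1" and
    S2: "srt_wf S2" "srt_deterministic S2" "srt_add_free S2" "T2 = srt_sem S2"
    unfolding DSRTA_definable_def by blast
  have "transd_compose T1 T2 = adrm_sem (comp_M S1 S2)"
    using comp_sem[OF S1(1-3) S2(1-3)] S1(4) S2(4) by simp
  thus "DSRTA_definable (transd_compose T1 T2)"
    using adrm_definable[OF comp_wf[OF S1(1-3) S2(1-3)]] by simp
next
  show "\<exists>T1 T2 :: (('a \<times> 'd) \<times> ('b \<times> 'd)) list set.
            DSRTA_definable T1 \<and> DSRTA_definable T2 \<and> \<not> DSRTA_definable (T1 \<union> T2)"
    by (rule union_part[OF assms])
qed


end
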